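(* Let $\phi\colon G'\to G$ be a covering map of digraphs such that every vertex and every edge of $G$ has exactly $d$ preimages, and let $\mathcal F$ be a sheaf on $G$. Then ${\rm m.e.}(\phi^*\mathcal F)=d\cdot{\rm m.e.}(\mathcal F)$. Moreover, if the maximum excess of $\mathcal F$ is attained at $U=\bigoplus_{v\in V_G}U_v\subset\mathcal F(V)$ (with $U_v\subset\mathcal F(v)$), then the maximum excess of $\phi^*\mathcal F$ is attained at $\phi^{-1}(U)=\bigoplus_{v'\in V_{G'}}U_{\phi(v')}$.
   Context: Digraphs are finite, with tail/head maps, multiple edges and loops allowed. A sheaf $\mathcal F$ on $G$: finite-dimensional $\mathbb F$-vector spaces $\mathcal F(P)$, $P\in V_G\sqcup E_G$, with linear maps $\mathcal F(t,e)\colon\mathcal F(e)\to\mathcal F(t_Ge)$, $\mathcal F(h,e)\colon\mathcal F(e)\to\mathcal F(h_Ge)$; $\mathcal F(V)=\bigoplus_v\mathcal F(v)$, $\mathcal F(E)=\bigoplus_e\mathcal F(e)$; $d_h,d_t\colon\mathcal F(E)\to\mathcal F(V)$ send the summand $\mathcal F(e)$ into $\mathcal F(h_Ge)$ resp. $\mathcal F(t_Ge)$ via the restriction maps. For a subspace $U\subset\mathcal F(V)$, $\Gamma_{\rm ht}(U)=\bigoplus_e\{w\in\mathcal F(e):d_hw\in U,\ d_tw\in U\}$, ${\rm excess}(\mathcal F,U)=\dim\Gamma_{\rm ht}(U)-\dim U$, ${\rm m.e.}(\mathcal F)=\max_U{\rm excess}(\mathcal F,U)$. A covering map $\phi\colon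 G'\to G$ is a digraph morphism mapping, for each vertex $v$, the edges with head $v$ bijectively onto those with head $\phi(v)$ and the edges with tail $v$ bijectively onto those with tail $\phi(v)$. The pullback $\phi^*\mathcal F$ has values $\mathcal F(\phi(P))$ and restriction maps $\mathcal F(h,\phi(e)),\mathcal F(t,\phi(e))$. *)

theory Defs
  imports Main "HOL-Library.Function_Algebras" "Graph_Theory.Digraph"
begin

text \<open>Digraphs: Graph_Theory's pre_digraph (abstract arcs with tail/head maps, so
multiple edges and loops are allowed), assumed finite via fin_digraph.

A sheaf over a field 'k is given in coordinates: F(v) = 'k^(vdim v), F(e) = 'k^(edim e),
and the restriction maps F(t,e): F(e) -> F(tail e), F(h,e): F(e) -> F(head e) are
given by matrices rest_t e, rest_h e (entry (i,j), i < vdim of the endpoint, j < edim e).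
Vectors in 'k^n are functions nat => 'k vanishing from n on.\<close>

record ('v,'e,'k) sheaf =
  vdim :: "'v \<Rightarrow> nat"
  edim :: "'e \<Rightarrow> nat"
  rest_t :: "'e \<Rightarrow> nat \<Rightarrow> nat \<Rightarrow> 'k"
  rest_h :: "'e \<Rightarrow> nat \<Rightarrow> nat \<Rightarrow> 'k"

definition fscale :: "'k::field \<Rightarrow> ('a \<Rightarrow> 'k) \<Rightarrow> ('a \<Rightarrow> 'k)" where
  "fscale c f = (\<lambda>x. c * f x)"

abbreviation fsubspace :: "('a \<Rightarrow> 'k::field) set \<Rightarrow> bool" where
  "fsubspace \<equiv> module.subspace (fscale :: 'k \<Rightarrow> _)"

abbreviation fdim :: "('a \<Rightarrow> 'k::field) set \<Rightarrow> nat" where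
  "fdim \<equiv> vector_space.dim (fscale :: 'k \<Rightarrow> _)"

definition stalkV :: "('v,'e,'k::field) sheaf \<Rightarrow> 'v \<Rightarrow> (nat \<Rightarrow> 'k) set" where
  "stalkV F v = {x. \<forall>i. vdim F v \<le> i \<longrightarrow> x i = 0}"

text \<open>F(V) = direct sum of the F(v), and F(E) = direct sum of the F(e).\<close>
definition totV :: "('v,'e) pre_digraph \<Rightarrow> ('v,'e,'k::field) sheaf \<Rightarrow> ('v \<times> nat \<Rightarrow> 'k) set" where
  "totV G F = {x. \<forall>v i. (v \<notin> verts G \<or> vdim F v \<le> i) \<longrightarrow> x (v,i) = 0}"

definition totE :: "('v,'e) pre_digraph \<Rightarrow> ('v,'e,'k::field) sheaf \<Rightarrow> ('e \<times> nat \<Rightarrow> 'k) set" where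
  "totE G F = {w. \<forall>e j. (e \<notin> arcs G \<or> edim F e \<le> j) \<longrightarrow> w (e,j) = 0}"

definition d_h :: "('v,'e) pre_digraph \<Rightarrow> ('v,'e,'k::field) sheaf \<Rightarrow> ('e \<times> nat \<Rightarrow> 'k) \<Rightarrow> ('v \<times> nat \<Rightarrow> 'k)" where
  "d_h G F w = (\<lambda>(v,i). if v \<in> verts G \<and> i < vdim F v
      then (\<Sum>e\<in>{e\<in>arcs G. head G e = v}. \<Sum>j<edim F e. rest_h F e i j * w (e,j)) else 0)"

definition d_t :: "('v,'e) pre_digraph \<Rightarrow> ('v,'e,'k::field) sheaf \<Rightarrow> ('e \<times> nat \<Rightarrow> 'k) \<Rightarrow> ('v \<times> nat \<Rightarrow> 'k)" where
  "d_t G F w = (\<lambda>(v,i). if v \<in> verts G \<and> i < vdim F v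
      then (\<Sum>e\<in>{e\<in>arcs G. tail G e = v}. \<Sum>j<edim F e. rest_t F e i j * w (e,j)) else 0)"

definition ecomp :: "'e \<Rightarrow> ('e \<times> nat \<Rightarrow> 'k::field) \<Rightarrow> ('e \<times> nat \<Rightarrow> 'k)" where
  "ecomp e w = (\<lambda>(e',j). if e' = e then w (e',j) else 0)"

definition Gamma_ht :: "('v,'e) pre_digraph \<Rightarrow> ('v,'e,'k::field) sheaf \<Rightarrow> ('v \<times> nat \<Rightarrow> 'k) set \<Rightarrow> ('e \<times> nat \<Rightarrow> 'k) set" where
  "Gamma_ht G F U = {w \<in> totE G F. \<forall>e\<in>arcs G.
      d_h G F (ecomp e w) \<in> U \<and> d_t G F (ecomp e w) \<in> U}"

definition excess :: "('v,'e) pre_digraph \<Rightarrow> ('v,'e,'k::field) sheaf \<Rightarrow> ('v \<times> nat \<Rightarrow> 'k) set \<Rightarrow> int" where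
  "excess G F U = int (fdim (Gamma_ht G F U)) - int (fdim U)"

definition admissible :: "('v,'e) pre_digraph \<Rightarrow> ('v,'e,'k::field) sheaf \<Rightarrow> ('v \<times> nat \<Rightarrow> 'k) set \<Rightarrow> bool" where
  "admissible G F U \<longleftrightarrow> fsubspace U \<and> U \<subseteq> totV G F"

definition max_excess :: "('v,'e) pre_digraph \<Rightarrow> ('v,'e,'k::field) sheaf \<Rightarrow> int" where
  "max_excess G F = Max {excess G F U | U. admissible G F U}"

definition attains_max_excess :: "('v,'e) pre_digraph \<Rightarrow> ('v,'e,'k::field) sheaf \<Rightarrow> ('v \<times> nat \<Rightarrow> 'k) set \<Rightarrow> bool" where
  "attains_max_excess G F U \<longleftrightarrow> admissible G F U \<and> excess G F U = max_excess G F"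

definition dsum :: "('v,'e) pre_digraph \<Rightarrow> ('v,'e,'k::field) sheaf \<Rightarrow> ('v \<Rightarrow> (nat \<Rightarrow> 'k) set) \<Rightarrow> ('v \<times> nat \<Rightarrow> 'k) set" where
  "dsum G F Uv = {x \<in> totV G F. \<forall>v\<in>verts G. (\<lambda>i. x (v,i)) \<in> Uv v}"

definition covering_map :: "('v2,'e2) pre_digraph \<Rightarrow> ('v,'e) pre_digraph \<Rightarrow> ('v2 \<Rightarrow> 'v) \<Rightarrow> ('e2 \<Rightarrow> 'e) \<Rightarrow> bool" where
  "covering_map G' G fv fe \<longleftrightarrow>
     (\<forall>v\<in>verts G'. fv v \<in> verts G) \<and>
     (\<forall>e\<in>arcs G'. fe e \<in> arcs G \<and> tail G (fe e) = fv (tail G' e) \<and> head G (fe e) = fv (head G' e)) \<and>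
     (\<forall>v\<in>verts G'. bij_betw fe {e\<in>arcs G'. head G' e = v} {e\<in>arcs G. head G e = fv v}
                 \<and> bij_betw fe {e\<in>arcs G'. tail G' e = v} {e\<in>arcs G. tail G e = fv v})"

definition pullback :: "('v2 \<Rightarrow> 'v) \<Rightarrow> ('e2 \<Rightarrow> 'e) \<Rightarrow> ('v,'e,'k) sheaf \<Rightarrow> ('v2,'e2,'k) sheaf" where
  "pullback fv fe F = \<lparr> vdim = (\<lambda>v. vdim F (fv v)), edim = (\<lambda>e. edim F (fe e)),
     rest_t = (\<lambda>e. rest_t F (fe e)), rest_h = (\<lambda>e. rest_h F (fe e)) \<rparr>"

end

theory Submission
  imports Defs "HOL-Combinatorics.Multiset_Permutations" "HOL-Combinatorics.Permutations"
begin

section \<open>Linear algebra infrastructure\<close>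

lemma sum_fun_apply: "(sum f I) x = sum (\<lambda>i. f i x) I"
  by (induction I rule: infinite_finite_induct) auto

lemma vs_fscale: "vector_space (fscale :: 'k::field \<Rightarrow> ('a \<Rightarrow> 'k) \<Rightarrow> ('a \<Rightarrow> 'k))"
  by unfold_locales (auto simp: fscale_def fun_eq_iff algebra_simps)

interpretation fs: vector_space "fscale :: 'k::field \<Rightarrow> ('a \<Rightarrow> 'k) \<Rightarrow> ('a \<Rightarrow> 'k)"
  by (rule vs_fscale)

context vector_space begin


lemma indep_card_le_dim:
  assumes "\<exists>W. finite W \<and> T \<subseteq> span W" "independent X" "X \<subseteq> T"
  shows "finite X \<and> card X \<le> dim T"
proof -
  obtain W where W: "finite W" "T \<subseteq> span W" using assms(1) by blast
  obtain C where C: "C \<subseteq> T" "independent C" "T \<subseteq> span C" "card C = dim T" by (rule basis_exists)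
  have "finite C" using independent_span_bound[OF W(1) C(2)] C(1) W(2) by blast
  then show ?thesis using independent_span_bound[OF _ assms(2), of C] assms(3) C by auto
qed

lemma dim_mono_fd: assumes "\<exists>W. finite W \<and> T \<subseteq> span W" "S \<subseteq> T" shows "dim S \<le> dim T"
proof -
  obtain B where B: "B \<subseteq> S" "independent B" "S \<subseteq> span B" "card B = dim S" by (rule basis_exists)
  show ?thesis using indep_card_le_dim[OF assms(1) B(2)] B assms(2) by auto
qed

lemma subspace_eq_dim:
  assumes "subspace S" "\<exists>W. finite W \<and> T \<subseteq> span W" "S \<subseteq> T" "dim T \<le> dim S"
  shows "T \<subseteq> S"
proof
  fix t assume t: "t \<in> T"
  show "t \<in> S"
  proof (rule ccontr)
    assume ns: "t \<notin> S"
    obtain B where B: "B \<subseteq> S" "independent B" "S \<subseteq> span B" "card B = dim S" by (rule basis_exists)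
    have spB: "span B \<subseteq> S" using span_minimal[OF B(1) assms(1)] .
    have "t \<notin> span B" using ns spB by blast
    then have ind: "independent (insert t B)" using independent_insertI B(2) by blast
    have sub: "insert t B \<subseteq> T" using t B(1) assms(3) by blast
    from indep_card_le_dim[OF assms(2) ind sub] have "finite (insert t B)" "card (insert t B) \<le> dim T" by auto
    moreover have "t \<notin> B" using ns B(1) by blast
    ultimately have "card B + 1 \<le> dim T" by simp
    then show False using B(4) assms(4) by simp
  qed
qed

lemma dim_zero: "dim {0} = 0"
proof -
  have "dim {0} = dim {}" by (rule span_eq_dim) simp
  also have "\<dots> = 0" using dim_eq_card_independent[OF independent_empty] by simp
  finally show ?thesis .
qed

lemma dim_sum_int:
  assumes S: "subspace S" "\<exists>W. finite W \<and> S \<subseteq> span W" and T: "subspace T" "\<exists>W. finite W \<and> T \<subseteq> span W"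
  shows "dim {x + y |x y. x \<in> S \<and> y \<in> T} + dim (S \<inter> T) = dim S + dim T"
proof -
  obtain B where B: "B \<subseteq> S \<inter> T" "independent B" "S \<inter> T \<subseteq> span B" "card B = dim (S \<inter> T)" by (rule basis_exists)
  obtain BS where BS: "B \<subseteq> BS" "BS \<subseteq> S" "independent BS" "S \<subseteq> span BS"
    using maximal_independent_subset_extend[of B S] B by blast
  obtain BT where BT: "B \<subseteq> BT" "BT \<subseteq> T" "independent BT" "T \<subseteq> span BT"
    using maximal_independent_subset_extend[of B T] B by blast
  have fBS: "finite BS" using indep_card_le_dim[OF S(2) BS(3) BS(2)] by simp
  have fBT: "finite BT" using indep_card_le_dim[OF T(2) BT(3) BT(2)] by simp
  have cS: "card BS = dim S" using basis_card_eq_dim[OF BS(2) BS(4) BS(3)] .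
  have cT: "card BT = dim T" using basis_card_eq_dim[OF BT(2) BT(4) BT(3)] .
  have spS: "span BS = S" using span_subspace[OF BS(2) BS(4) S(1)] .
  have spT: "span BT = T" using span_subspace[OF BT(2) BT(4) T(1)] .
  have int: "BS \<inter> BT = B"
  proof
    show "BS \<inter> BT \<subseteq> B"
    proof
      fix x assume x: "x \<in> BS \<inter> BT"
      show "x \<in> B"
      proof (rule ccontr)
        assume "x \<notin> B"
        then have "B \<subseteq> BS - {x}" using BS(1) by blast
        moreover have "x \<in> span B" using x BS(2) BT(2) B(3) by blast
        ultimately have "x \<in> span (BS - {x})" using span_mono by blast
        then show False using BS(3) x unfolding dependent_def by blast
      qed
    qed
    show "B \<subseteq> BS \<inter> BT" using BS BT by blast
  qed
  have indU: "independent (BS \<union> Y)" if "Y \<subseteq> BT - B" for Y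
  proof -
    have "finite Y" using that fBT finite_subset by blast
    then show ?thesis using that
    proof (induction Y rule: finite_induct)
      case empty then show ?case using BS(3) by simp
    next
      case (insert y Y)
      have IH: "independent (BS \<union> Y)" using insert by blast
      have y: "y \<in> BT" "y \<notin> B" "y \<notin> Y" using insert by auto
      have "y \<notin> span (BS \<union> Y)"
      proof
        assume "y \<in> span (BS \<union> Y)"
        then obtain s z where sz: "y = s + z" "s \<in> span BS" "z \<in> span Y" using span_Un by blast
        have "span Y \<subseteq> T" using insert(4) spT span_mono by blast
        then have zT: "z \<in> T" using sz by blast
        have sS: "s \<in> S" using sz spS by blast
        have "s = y - z" using sz by simp
        then have sT: "s \<in> T" using subspace_diff[OF T(1)] y(1) BT(2) zT by blast
        have "s \<in> span B" using sS sT B(3) by blast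
        then have "s \<in> span (B \<union> Y)" using span_mono[of B "B \<union> Y"] by blast
        moreover have "z \<in> span (B \<union> Y)" using sz span_mono[of Y "B \<union> Y"] by blast
        ultimately have "y \<in> span (B \<union> Y)" using sz span_add by simp
        moreover have "B \<union> Y \<subseteq> BT - {y}" using BT(1) insert y by blast
        ultimately have "y \<in> span (BT - {y})" using span_mono by blast
        then show False using BT(3) y(1) dependent_def by blast
      qed
      then show ?case using independent_insertI[OF _ IH] by simp
    qed
  qed
  have "BS \<union> (BT - B) = BS \<union> BT" using BS(1) by blast
  then have indUn: "independent (BS \<union> BT)" using indU[of "BT - B"] by simp
  let ?ST = "{x + y |x y. x \<in> S \<and> y \<in> T}"
  have sub1: "BS \<union> BT \<subseteq> ?ST"
  proof
    fix x assume "x \<in> BS \<union> BT"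
    then show "x \<in> ?ST"
    proof
      assume "x \<in> BS" then have "x \<in> S" using BS by blast
      then show ?thesis using subspace_0[OF T(1)] by force
    next
      assume "x \<in> BT" then have "x \<in> T" using BT by blast
      then show ?thesis using subspace_0[OF S(1)] by force
    qed
  qed
  have sub2: "?ST \<subseteq> span (BS \<union> BT)" using span_Un spS spT by blast
  have "card (BS \<union> BT) = dim ?ST" using basis_card_eq_dim[OF sub1 sub2 indUn] .
  moreover have "card BS + card BT = card (BS \<union> BT) + card (BS \<inter> BT)"
    using card_Un_Int[OF fBS fBT] .
  ultimately show ?thesis using int cS cT B(4) by simp
qed

end


section \<open>Finite supports and products\<close>

definition fin_supp :: "nat \<Rightarrow> (nat \<Rightarrow> 'k::field) set" where
  "fin_supp n = {y. \<forall>j. n \<le> j \<longrightarrow> y j = 0}"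

definition Prod :: "'a set \<Rightarrow> ('a \<Rightarrow> (nat \<Rightarrow> 'k::field) set) \<Rightarrow> ('a \<times> nat \<Rightarrow> 'k) set" where
  "Prod A W = {x. \<forall>a. (\<lambda>i. x (a,i)) \<in> (if a \<in> A then W a else {0})}"

definition emb :: "'a \<Rightarrow> (nat \<Rightarrow> 'k::field) \<Rightarrow> ('a \<times> nat \<Rightarrow> 'k)" where
  "emb a y = (\<lambda>(b,i). if b = a then y i else 0)"

definition ssum :: "('a \<Rightarrow> 'k::field) set \<Rightarrow> ('a \<Rightarrow> 'k) set \<Rightarrow> ('a \<Rightarrow> 'k) set" where
  "ssum A B = {x + y |x y. x \<in> A \<and> y \<in> B}"

abbreviation fd :: "('a \<Rightarrow> 'k::field) set \<Rightarrow> bool" where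
  "fd S \<equiv> \<exists>W. finite W \<and> S \<subseteq> fs.span W"

lemma fd_mono: "fd T \<Longrightarrow> S \<subseteq> T \<Longrightarrow> fd S" by blast

lemma fin_supp_fd: "fd (fin_supp n :: (nat \<Rightarrow> 'k::field) set)"
proof (intro exI conjI)
  let ?W = "(\<lambda>j. (\<lambda>i. if i = j then (1::'k) else 0)) ` {..<n}"
  show "finite ?W" by simp
  show "fin_supp n \<subseteq> fs.span ?W"
  proof
    fix y :: "nat \<Rightarrow> 'k" assume y: "y \<in> fin_supp n"
    have "y = (\<Sum>j<n. fscale (y j) (\<lambda>i. if i = j then 1 else 0))"
    proof
      fix i
      show "y i = (\<Sum>j<n. fscale (y j) (\<lambda>i. if i = j then 1 else 0)) i"
        using y by (auto simp: sum_fun_apply fscale_def fin_supp_def if_distrib cong: if_cong)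
    qed
    also have "\<dots> \<in> fs.span ?W"
      by (intro fs.span_sum fs.span_scale fs.span_base) auto
    finally show "y \<in> fs.span ?W" .
  qed
qed

lemma fin_supp_subspace: "fsubspace (fin_supp n :: (nat \<Rightarrow> 'k::field) set)"
  unfolding fs.subspace_def fin_supp_def fscale_def by auto

lemma Prod_fd:
  assumes "finite A"
  shows "fd (Prod A (\<lambda>a. fin_supp (n a)) :: ('a \<times> nat \<Rightarrow> 'k::field) set)"
proof (intro exI conjI)
  let ?P = "SIGMA a:A. {..<n a}"
  let ?W = "(\<lambda>p. (\<lambda>q. if q = p then (1::'k) else 0)) ` ?P"
  have fP: "finite ?P" using assms by auto
  show "finite ?W" using fP by simp
  show "Prod A (\<lambda>a. fin_supp (n a)) \<subseteq> fs.span ?W"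
  proof
    fix x :: "'a \<times> nat \<Rightarrow> 'k" assume x: "x \<in> Prod A (\<lambda>a. fin_supp (n a))"
    have xz: "x q = 0" if "q \<notin> ?P" for q
    proof (cases q)
      case (Pair b i)
      have "(\<lambda>i. x (b,i)) \<in> (if b \<in> A then fin_supp (n b) else {0})" using x unfolding Prod_def by blast
      then show ?thesis using that Pair by (auto simp: fin_supp_def split: if_splits dest: fun_cong)
    qed
    have "x = (\<Sum>p\<in>?P. fscale (x p) (\<lambda>q. if q = p then 1 else 0))"
    proof
      fix q
      show "x q = (\<Sum>p\<in>?P. fscale (x p) (\<lambda>q. if q = p then 1 else 0)) q"
        using xz[of q] fP by (auto simp: sum_fun_apply fscale_def if_distrib cong: if_cong)
    qed
    also have "\<dots> \<in> fs.span ?W"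
      by (intro fs.span_sum fs.span_scale fs.span_base) auto
    finally show "x \<in> fs.span ?W" .
  qed
qed

lemma comp_add: "(\<lambda>i. (x + y) (a, i)) = (\<lambda>i. x (a,i)) + (\<lambda>i. y (a,i))"
  by (simp add: fun_eq_iff)

lemma comp_scale: "(\<lambda>i. fscale c x (a, i)) = fscale c (\<lambda>i. x (a,i))"
  by (simp add: fun_eq_iff fscale_def)

lemma comp_zero: "(\<lambda>i. (0::'a \<times> nat \<Rightarrow> 'k::field) (a, i)) = 0"
  by (simp add: fun_eq_iff)

lemma subspace_Prod:
  assumes "\<forall>a\<in>A. fsubspace (W a)"
  shows "fsubspace (Prod A W)"
  unfolding fs.subspace_def
proof (intro conjI ballI allI)
  show "0 \<in> Prod A W" using assms fs.subspace_0 unfolding Prod_def by (auto simp flip: zero_fun_def)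
  fix x y assume x: "x \<in> Prod A W" and y: "y \<in> Prod A W"
  show "x + y \<in> Prod A W" unfolding Prod_def
  proof (intro CollectI allI)
    fix a
    have "(\<lambda>i. x (a,i)) \<in> (if a \<in> A then W a else {0})" "(\<lambda>i. y (a,i)) \<in> (if a \<in> A then W a else {0})"
      using x y unfolding Prod_def by blast+
    then show "(\<lambda>i. (x + y) (a, i)) \<in> (if a \<in> A then W a else {0})"
      unfolding comp_add using assms fs.subspace_add by (auto split: if_splits)
  qed
next
  fix c x assume x: "x \<in> Prod A W"
  show "fscale c x \<in> Prod A W" unfolding Prod_def
  proof (intro CollectI allI)
    fix a
    have "(\<lambda>i. x (a,i)) \<in> (if a \<in> A then W a else {0})"
      using x unfolding Prod_def by blast
    then show "(\<lambda>i. fscale c x (a, i)) \<in> (if a \<in> A then W a else {0})"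
      using assms fs.subspace_scale by (auto simp: comp_scale fscale_def zero_fun_def fun_eq_iff split: if_splits)
  qed
qed

lemma Prod_mono: "\<forall>a\<in>A. W a \<subseteq> V a \<Longrightarrow> Prod A W \<subseteq> Prod A V"
  unfolding Prod_def by (auto split: if_splits)

lemma emb_hom: "module_hom fscale fscale (emb a :: (nat \<Rightarrow> 'k::field) \<Rightarrow> _)"
  unfolding module_hom_def module_hom_axioms_def module_iff_vector_space
  by (auto simp: emb_def fscale_def fun_eq_iff vs_fscale)

lemma dim_inj_image:
  assumes f: "module_hom (fscale :: 'k::field \<Rightarrow> _) fscale (f :: ('a \<Rightarrow> 'k) \<Rightarrow> ('b \<Rightarrow> 'k))" and "inj f"
  shows "fdim (f ` S) = fdim S"
proof -
  obtain B where B: "B \<subseteq> S" "fs.independent B" "S \<subseteq> fs.span B" "card B = fdim S" by (rule fs.basis_exists)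
  have "fs.independent (f ` B)"
    using module_hom.independent_injective_image[OF f B(2)] assms(2) by (simp add: inj_on_def inj_def)
  moreover have "f ` B \<subseteq> f ` S" using B by blast
  moreover have "f ` S \<subseteq> fs.span (f ` B)" using module_hom.span_image[OF f, of B] B(3) by blast
  ultimately have "card (f ` B) = fdim (f ` S)" using fs.basis_card_eq_dim by blast
  moreover have "card (f ` B) = card B" using assms(2) by (simp add: card_image inj_on_def inj_def)
  ultimately show ?thesis using B(4) by simp
qed

lemma emb_inj: "inj (emb a)"
  unfolding inj_def emb_def fun_eq_iff by auto


lemma Prod_single: "Prod {a} W = emb a ` W a"
proof
  show "Prod {a} W \<subseteq> emb a ` W a"
  proof
    fix x assume x: "x \<in> Prod {a} W"
    have c: "(\<lambda>i. x (b,i)) \<in> (if b \<in> {a} then W b else {0})" for b using x unfolding Prod_def by blast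
    have "x = emb a (\<lambda>i. x (a,i))"
    proof
      fix q show "x q = emb a (\<lambda>i. x (a,i)) q"
      proof (cases q)
        case (Pair b i) then show ?thesis using c[of b] by (auto simp: emb_def fun_eq_iff)
      qed
    qed
    then show "x \<in> emb a ` W a" using c[of a] by auto
  qed
  show "emb a ` W a \<subseteq> Prod {a} W"
    unfolding Prod_def by (auto simp: emb_def fun_eq_iff)
qed

lemma Prod_empty: "Prod {} W = {0}"
  unfolding Prod_def by (auto simp: fun_eq_iff)

lemma Prod_insert:
  assumes "a \<notin> A" "\<forall>b\<in>insert a A. fsubspace (W b)"
  shows "Prod (insert a A) W = ssum (Prod {a} W) (Prod A W)"
proof
  show "Prod (insert a A) W \<subseteq> ssum (Prod {a} W) (Prod A W)"
  proof
    fix x assume x: "x \<in> Prod (insert a A) W"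
    have c: "(\<lambda>i. x (b,i)) \<in> (if b \<in> insert a A then W b else {0})" for b using x unfolding Prod_def by blast
    define x1 where "x1 = (\<lambda>(b,i). if b = a then x (b,i) else 0)"
    define x2 where "x2 = (\<lambda>(b,i). if b = a then 0 else x (b,i))"
    have "x = x1 + x2" by (auto simp: x1_def x2_def fun_eq_iff)
    moreover have "x1 \<in> Prod {a} W"
      unfolding Prod_def using c[of a] by (auto simp: x1_def zero_fun_def)
    moreover have "x2 \<in> Prod A W"
      unfolding Prod_def
    proof (intro CollectI allI)
      fix b
      show "(\<lambda>i. x2 (b, i)) \<in> (if b \<in> A then W b else {0})"
        using c[of b] assms(1) by (cases "b = a") (auto simp: x2_def zero_fun_def)
    qed
    ultimately show "x \<in> ssum (Prod {a} W) (Prod A W)" unfolding ssum_def by blast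
  qed
  show "ssum (Prod {a} W) (Prod A W) \<subseteq> Prod (insert a A) W"
  proof
    fix z assume "z \<in> ssum (Prod {a} W) (Prod A W)"
    then obtain x y where z: "z = x + y" and x: "x \<in> Prod {a} W" and y: "y \<in> Prod A W"
      unfolding ssum_def by blast
    have cx: "(\<lambda>i. x (b,i)) \<in> (if b \<in> {a} then W b else {0})" for b using x unfolding Prod_def by blast
    have cy: "(\<lambda>i. y (b,i)) \<in> (if b \<in> A then W b else {0})" for b using y unfolding Prod_def by blast
    show "z \<in> Prod (insert a A) W"
      unfolding Prod_def z
    proof (intro CollectI allI)
      fix b
      show "(\<lambda>i. (x + y) (b, i)) \<in> (if b \<in> insert a A then W b else {0})"
        unfolding comp_add
      proof (cases "b = a")
        case True
        then show "(\<lambda>i. x (b,i)) + (\<lambda>i. y (b,i)) \<in> (if b \<in> insert a A then W b else {0})"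
          using cx[of b] cy[of b] assms(1) by simp
      next
        case False
        then show "(\<lambda>i. x (b,i)) + (\<lambda>i. y (b,i)) \<in> (if b \<in> insert a A then W b else {0})"
          using cx[of b] cy[of b] assms fs.subspace_add[of "W b"] by (auto split: if_splits)
      qed
    qed
  qed
qed

lemma Prod_int:
  assumes "a \<notin> A"
  shows "Prod {a} W \<inter> Prod A W \<subseteq> {0}"
proof
  fix x assume x: "x \<in> Prod {a} W \<inter> Prod A W"
  have cx: "(\<lambda>i. x (b,i)) \<in> (if b \<in> {a} then W b else {0})" for b using x unfolding Prod_def by blast
  have cy: "(\<lambda>i. x (b,i)) \<in> (if b \<in> A then W b else {0})" for b using x unfolding Prod_def by blast
  have "x = 0"
  proof
    fix q show "x q = 0 q"
    proof (cases q)
      case (Pair b i)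
      show ?thesis
      proof (cases "b = a")
        case True then show ?thesis using cy[of b] assms Pair by (auto simp: fun_eq_iff)
      next
        case False then show ?thesis using cx[of b] Pair by (auto simp: fun_eq_iff)
      qed
    qed
  qed
  then show "x \<in> {0}" by simp
qed

lemma dim_zero_fd: "fdim ({0} :: ('a \<Rightarrow> 'k::field) set) = 0"
  by (rule fs.dim_zero)

lemma dim_Prod:
  assumes "finite A" "\<forall>a\<in>A. fsubspace (W a) \<and> W a \<subseteq> fin_supp (n a)"
  shows "fdim (Prod A W :: ('a \<times> nat \<Rightarrow> 'k::field) set) = (\<Sum>a\<in>A. fdim (W a))"
  using assms
proof (induction A rule: finite_induct)
  case empty
  then show ?case by (simp add: Prod_empty dim_zero_fd)
next
  case (insert a A)
  let ?X = "Prod {a} W" and ?Y = "Prod A W"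
  have sX: "fsubspace ?X" using insert.prems by (intro subspace_Prod) auto
  have sY: "fsubspace ?Y" using insert.prems by (intro subspace_Prod) auto
  have fX: "fd ?X"
    by (rule fd_mono[OF Prod_fd[of "{a}" n]]) (use insert.prems in \<open>auto intro!: Prod_mono\<close>)
  have fY: "fd ?Y"
    by (rule fd_mono[OF Prod_fd[of A n]]) (use insert in \<open>auto intro!: Prod_mono\<close>)
  have eq: "Prod (insert a A) W = ssum ?X ?Y" using Prod_insert[of a A W] insert by auto
  have "fdim (?X \<inter> ?Y) \<le> fdim ({0} :: ('a \<times> nat \<Rightarrow> 'k) set)"
    by (rule fs.dim_mono_fd) (use Prod_int[OF insert(2)] in auto)
  then have i0: "fdim (?X \<inter> ?Y) = 0" by (simp add: dim_zero_fd)
  have dX: "fdim ?X = fdim (W a)"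
    unfolding Prod_single by (rule dim_inj_image[OF emb_hom emb_inj])
  have "fdim (ssum ?X ?Y) = fdim ?X + fdim ?Y"
    using fs.dim_sum_int[OF sX fX sY fY] i0 unfolding ssum_def by simp
  then show ?case using eq dX insert by simp
qed


section \<open>Excess of families of subspaces\<close>

definition gr :: "('v,'e) pre_digraph \<Rightarrow> bool" where
  "gr H \<longleftrightarrow> finite (verts H) \<and> finite (arcs H) \<and> (\<forall>e\<in>arcs H. tail H e \<in> verts H \<and> head H e \<in> verts H)"

lemma fin_digraph_gr: "fin_digraph H \<Longrightarrow> gr H"
  by (auto simp: gr_def fin_digraph_def fin_digraph_axioms_def wf_digraph_def)

definition hv :: "('v,'e) pre_digraph \<Rightarrow> ('v,'e,'k::field) sheaf \<Rightarrow> 'e \<Rightarrow> (nat \<Rightarrow> 'k) \<Rightarrow> (nat \<Rightarrow> 'k)" where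
  "hv H F e y = (\<lambda>i. if i < vdim F (head H e) then (\<Sum>j<edim F e. rest_h F e i j * y j) else 0)"

definition tv :: "('v,'e) pre_digraph \<Rightarrow> ('v,'e,'k::field) sheaf \<Rightarrow> 'e \<Rightarrow> (nat \<Rightarrow> 'k) \<Rightarrow> (nat \<Rightarrow> 'k)" where
  "tv H F e y = (\<lambda>i. if i < vdim F (tail H e) then (\<Sum>j<edim F e. rest_t F e i j * y j) else 0)"

definition Gam :: "('v,'e) pre_digraph \<Rightarrow> ('v,'e,'k::field) sheaf \<Rightarrow> ('v \<Rightarrow> (nat \<Rightarrow> 'k) set) \<Rightarrow> 'e \<Rightarrow> (nat \<Rightarrow> 'k) set" where
  "Gam H F U e = {y \<in> fin_supp (edim F e). hv H F e y \<in> U (head H e) \<and> tv H F e y \<in> U (tail H e)}"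

definition fexc :: "('v,'e) pre_digraph \<Rightarrow> ('v,'e,'k::field) sheaf \<Rightarrow> ('v \<Rightarrow> (nat \<Rightarrow> 'k) set) \<Rightarrow> int" where
  "fexc H F U = (\<Sum>e\<in>arcs H. int (fdim (Gam H F U e))) - (\<Sum>v\<in>verts H. int (fdim (U v)))"

definition valid :: "('v,'e) pre_digraph \<Rightarrow> ('v,'e,'k::field) sheaf \<Rightarrow> ('v \<Rightarrow> (nat \<Rightarrow> 'k) set) \<Rightarrow> bool" where
  "valid H F U \<longleftrightarrow> (\<forall>v\<in>verts H. fsubspace (U v) \<and> U v \<subseteq> stalkV F v)"

lemma stalkV_fin_supp: "stalkV F v = fin_supp (vdim F v)"
  by (simp add: stalkV_def fin_supp_def)

lemma hv_add: "hv H F e (y + z) = hv H F e y + hv H F e z"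
  by (auto simp: hv_def fun_eq_iff sum.distrib algebra_simps)

lemma hv_scale: "hv H F e (fscale c y) = fscale c (hv H F e y)"
  by (auto simp: hv_def fun_eq_iff fscale_def sum_distrib_left algebra_simps)

lemma tv_add: "tv H F e (y + z) = tv H F e y + tv H F e z"
  by (auto simp: tv_def fun_eq_iff sum.distrib algebra_simps)

lemma tv_scale: "tv H F e (fscale c y) = fscale c (tv H F e y)"
  by (auto simp: tv_def fun_eq_iff fscale_def sum_distrib_left algebra_simps)

lemma hv_stalk: "hv H F e y \<in> stalkV F (head H e)"
  by (auto simp: hv_def stalkV_def)

lemma tv_stalk: "tv H F e y \<in> stalkV F (tail H e)"
  by (auto simp: tv_def stalkV_def)

lemma Gam_subspace:
  fixes F :: "('v,'e,'k::field) sheaf"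
  assumes "gr H" "valid H F U" "e \<in> arcs H"
  shows "fsubspace (Gam H F U e)"
proof -
  have h: "fsubspace (U (head H e))" "fsubspace (U (tail H e))"
    using assms by (auto simp: gr_def valid_def)
  have fs0: "fsubspace (fin_supp (edim F e) :: (nat \<Rightarrow> 'k) set)" by (rule fin_supp_subspace)
  have z1: "hv H F e 0 = 0" "tv H F e 0 = 0" by (auto simp: hv_def tv_def fun_eq_iff)
  show ?thesis
    unfolding fs.subspace_def Gam_def
  proof (intro conjI ballI allI)
    show "0 \<in> {y \<in> fin_supp (edim F e). hv H F e y \<in> U (head H e) \<and> tv H F e y \<in> U (tail H e)}"
      using z1 fs.subspace_0[OF h(1)] fs.subspace_0[OF h(2)] fs.subspace_0[OF fs0] by simp
    fix x y assume x: "x \<in> {y \<in> fin_supp (edim F e). hv H F e y \<in> U (head H e) \<and> tv H F e y \<in> U (tail H e)}"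
      and y: "y \<in> {y \<in> fin_supp (edim F e). hv H F e y \<in> U (head H e) \<and> tv H F e y \<in> U (tail H e)}"
    show "x + y \<in> {y \<in> fin_supp (edim F e). hv H F e y \<in> U (head H e) \<and> tv H F e y \<in> U (tail H e)}"
      using x y fs.subspace_add[OF h(1)] fs.subspace_add[OF h(2)] fs.subspace_add[OF fs0]
      by (simp add: hv_add tv_add)
  next
    fix c x assume x: "x \<in> {y \<in> fin_supp (edim F e). hv H F e y \<in> U (head H e) \<and> tv H F e y \<in> U (tail H e)}"
    show "fscale c x \<in> {y \<in> fin_supp (edim F e). hv H F e y \<in> U (head H e) \<and> tv H F e y \<in> U (tail H e)}"
      using x fs.subspace_scale[OF h(1)] fs.subspace_scale[OF h(2)] fs.subspace_scale[OF fs0]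
      by (simp add: hv_scale tv_scale)
  qed
qed

lemma Gam_fin_supp: "Gam H F U e \<subseteq> fin_supp (edim F e)"
  by (auto simp: Gam_def)

lemma d_h_ecomp:
  assumes "gr H" "e \<in> arcs H"
  shows "d_h H F (ecomp e w) = emb (head H e) (hv H F e (\<lambda>j. w (e,j)))"
proof
  fix q show "d_h H F (ecomp e w) q = emb (head H e) (hv H F e (\<lambda>j. w (e,j))) q"
  proof (cases q)
    case (Pair v i)
    have fin: "finite {e' \<in> arcs H. head H e' = v}" using assms(1) by (auto simp: gr_def)
    have inner: "(\<Sum>j<edim F e'. rest_h F e' i j * ecomp e w (e',j))
        = (if e' = e then (\<Sum>j<edim F e. rest_h F e i j * w (e,j)) else 0)" for e'
      by (auto simp: ecomp_def)
    have s: "(\<Sum>e'\<in>{e' \<in> arcs H. head H e' = v}. \<Sum>j<edim F e'. rest_h F e' i j * ecomp e w (e',j))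
        = (if head H e = v then (\<Sum>j<edim F e. rest_h F e i j * w (e,j)) else 0)"
      unfolding inner using fin assms(2) by (simp add: sum.delta)
    have hv: "head H e \<in> verts H" using assms by (auto simp: gr_def)
    show ?thesis using Pair s hv by (auto simp: d_h_def emb_def hv_def)
  qed
qed

lemma d_t_ecomp:
  assumes "gr H" "e \<in> arcs H"
  shows "d_t H F (ecomp e w) = emb (tail H e) (tv H F e (\<lambda>j. w (e,j)))"
proof
  fix q show "d_t H F (ecomp e w) q = emb (tail H e) (tv H F e (\<lambda>j. w (e,j))) q"
  proof (cases q)
    case (Pair v i)
    have fin: "finite {e' \<in> arcs H. tail H e' = v}" using assms(1) by (auto simp: gr_def)
    have inner: "(\<Sum>j<edim F e'. rest_t F e' i j * ecomp e w (e',j))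
        = (if e' = e then (\<Sum>j<edim F e. rest_t F e i j * w (e,j)) else 0)" for e'
      by (auto simp: ecomp_def)
    have s: "(\<Sum>e'\<in>{e' \<in> arcs H. tail H e' = v}. \<Sum>j<edim F e'. rest_t F e' i j * ecomp e w (e',j))
        = (if tail H e = v then (\<Sum>j<edim F e. rest_t F e i j * w (e,j)) else 0)"
      unfolding inner using fin assms(2) by (simp add: sum.delta)
    have tv: "tail H e \<in> verts H" using assms by (auto simp: gr_def)
    show ?thesis using Pair s tv by (auto simp: d_t_def emb_def tv_def)
  qed
qed

lemma emb_in_dsum:
  assumes "v \<in> verts H" "y \<in> stalkV F v" "\<forall>u\<in>verts H. 0 \<in> U u"
  shows "emb v y \<in> dsum H F U \<longleftrightarrow> y \<in> U v"
proof -
  have comp: "(\<lambda>i. emb v y (u,i)) = (if u = v then y else 0)" for u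
    by (auto simp: emb_def fun_eq_iff)
  have tot: "emb v y \<in> totV H F" using assms(1,2) by (auto simp: totV_def emb_def stalkV_def)
  show ?thesis unfolding dsum_def using tot assms by (auto simp: comp)
qed

lemma totE_Prod: "totE H F = Prod (arcs H) (\<lambda>e. fin_supp (edim F e))"
  unfolding totE_def Prod_def fin_supp_def by (auto simp: fun_eq_iff)

lemma totV_Prod: "totV H F = Prod (verts H) (\<lambda>v. fin_supp (vdim F v))"
  unfolding totV_def Prod_def fin_supp_def by (auto simp: fun_eq_iff)

lemma dsum_Prod:
  assumes "valid H F U"
  shows "dsum H F U = Prod (verts H) U"
  using assms unfolding dsum_def totV_def Prod_def valid_def stalkV_def
  by (auto simp: fun_eq_iff)

lemma valid_0: "valid H F U \<Longrightarrow> \<forall>u\<in>verts H. 0 \<in> U u"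
  unfolding valid_def using fs.subspace_0 by blast

lemma Gamma_dsum:
  assumes "gr H" "valid H F U"
  shows "Gamma_ht H F (dsum H F U) = Prod (arcs H) (Gam H F U)"
proof -
  have hd: "d_h H F (ecomp e w) \<in> dsum H F U \<longleftrightarrow> hv H F e (\<lambda>j. w (e,j)) \<in> U (head H e)"
    if "e \<in> arcs H" for e w
    unfolding d_h_ecomp[OF assms(1) that]
    by (rule emb_in_dsum) (use assms that hv_stalk valid_0[OF assms(2)] in \<open>auto simp: gr_def\<close>)
  have tl: "d_t H F (ecomp e w) \<in> dsum H F U \<longleftrightarrow> tv H F e (\<lambda>j. w (e,j)) \<in> U (tail H e)"
    if "e \<in> arcs H" for e w
    unfolding d_t_ecomp[OF assms(1) that]
    by (rule emb_in_dsum) (use assms that tv_stalk valid_0[OF assms(2)] in \<open>auto simp: gr_def\<close>)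
  show ?thesis
    unfolding Gamma_ht_def totE_Prod
    using hd tl by (auto simp: Prod_def Gam_def split: if_splits)
qed

lemma E1:
  assumes "gr H" "valid H F U"
  shows "excess H F (dsum H F U) = fexc H F U"
proof -
  have fa: "finite (arcs H)" "finite (verts H)" using assms(1) by (auto simp: gr_def)
  have "fdim (Gamma_ht H F (dsum H F U)) = (\<Sum>e\<in>arcs H. fdim (Gam H F U e))"
    unfolding Gamma_dsum[OF assms]
    by (rule dim_Prod[where n="\<lambda>e. edim F e", OF fa(1)]) (use Gam_subspace[OF assms] Gam_fin_supp in \<open>auto simp: Gam_def\<close>)
  moreover have "fdim (dsum H F U) = (\<Sum>v\<in>verts H. fdim (U v))"
    unfolding dsum_Prod[OF assms(2)]
    by (rule dim_Prod[OF fa(2)]) (use assms(2) in \<open>auto simp: valid_def stalkV_fin_supp\<close>)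
  ultimately show ?thesis by (simp add: excess_def fexc_def)
qed

lemma adm_dsum:
  assumes "gr H" "valid H F U"
  shows "admissible H F (dsum H F U)"
  unfolding admissible_def dsum_Prod[OF assms(2)]
proof
  show "fsubspace (Prod (verts H) U)" using assms(2) by (intro subspace_Prod) (auto simp: valid_def)
  show "Prod (verts H) U \<subseteq> totV H F"
    unfolding totV_Prod by (rule Prod_mono) (use assms(2) in \<open>auto simp: valid_def stalkV_fin_supp\<close>)
qed


lemma totV_fd: "gr H \<Longrightarrow> fd (totV H F)"
  unfolding totV_Prod by (rule Prod_fd) (simp add: gr_def)

lemma totE_fd: "gr H \<Longrightarrow> fd (totE H F)"
  unfolding totE_Prod by (rule Prod_fd) (simp add: gr_def)

lemma emb_sum_eq:
  assumes "finite (verts H)" "x \<in> totV H F"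
  shows "x = (\<Sum>v\<in>verts H. emb v (\<lambda>i. x (v,i)))"
proof
  fix q show "x q = (\<Sum>v\<in>verts H. emb v (\<lambda>i. x (v,i))) q"
  proof (cases q)
    case (Pair b i)
    have "(\<Sum>v\<in>verts H. emb v (\<lambda>i. x (v,i))) (b,i) = (if b \<in> verts H then x (b,i) else 0)"
      using assms(1) by (simp add: sum_fun_apply emb_def sum.delta')
    also have "\<dots> = x (b,i)" using assms(2) by (auto simp: totV_def)
    finally show ?thesis using Pair by simp
  qed
qed

lemma E2:
  fixes F :: "('v,'e,'k::field) sheaf"
  assumes "gr H" "admissible H F U"
  shows "\<exists>U0. valid H F U0 \<and> excess H F U \<le> fexc H F U0"
proof -
  define U0 where "U0 v = stalkV F v \<inter> {y. emb v y \<in> U}" for v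
  have sU: "fsubspace U" and UT: "U \<subseteq> totV H F" using assms(2) admissible_def by auto
  have val: "valid H F U0"
    unfolding valid_def
  proof (intro ballI conjI)
    fix v show "U0 v \<subseteq> stalkV F v" by (auto simp: U0_def)
    show "fsubspace (U0 v)" unfolding U0_def
      by (intro fs.subspace_inter)
         (auto simp: stalkV_fin_supp fin_supp_subspace intro: module_hom.subspace_linear_preimage[OF emb_hom sU])
  qed
  have G: "Gamma_ht H F U = Gamma_ht H F (dsum H F U0)"
  proof -
    have hd: "d_h H F (ecomp e w) \<in> dsum H F U0 \<longleftrightarrow> d_h H F (ecomp e w) \<in> U"
      if "e \<in> arcs H" for e w
    proof -
      have hv: "head H e \<in> verts H" using assms(1) that by (auto simp: gr_def)
      show ?thesis unfolding d_h_ecomp[OF assms(1) that]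
        by (subst emb_in_dsum) (use hv hv_stalk valid_0[OF val] in \<open>auto simp: U0_def\<close>)
    qed
    have tl: "d_t H F (ecomp e w) \<in> dsum H F U0 \<longleftrightarrow> d_t H F (ecomp e w) \<in> U"
      if "e \<in> arcs H" for e w
    proof -
      have tv: "tail H e \<in> verts H" using assms(1) that by (auto simp: gr_def)
      show ?thesis unfolding d_t_ecomp[OF assms(1) that]
        by (subst emb_in_dsum) (use tv tv_stalk valid_0[OF val] in \<open>auto simp: U0_def\<close>)
    qed
    show ?thesis unfolding Gamma_ht_def using hd tl by auto
  qed
  have sub: "dsum H F U0 \<subseteq> U"
  proof
    fix x assume x: "x \<in> dsum H F U0"
    have xt: "x \<in> totV H F" using x by (simp add: dsum_def)
    have "(\<Sum>v\<in>verts H. emb v (\<lambda>i. x (v,i))) \<in> U"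
      by (rule fs.subspace_sum[OF sU]) (use x in \<open>auto simp: dsum_def U0_def\<close>)
    then show "x \<in> U" using emb_sum_eq[OF _ xt] assms(1) by (simp add: gr_def)
  qed
  have "fdim (dsum H F U0) \<le> fdim U"
    by (rule fs.dim_mono_fd[OF fd_mono[OF totV_fd[OF assms(1)] UT] sub])
  then have "excess H F U \<le> excess H F (dsum H F U0)"
    unfolding excess_def G by simp
  then show ?thesis using E1[OF assms(1) val] val by auto
qed

lemma excess_bounds:
  fixes F :: "('v,'e,'k::field) sheaf"
  assumes "gr H" "admissible H F U"
  shows "excess H F U \<in> {- int (fdim (totV H F)) .. int (fdim (totE H F))}"
proof -
  have "fdim U \<le> fdim (totV H F)"
    using assms fs.dim_mono_fd[OF totV_fd[OF assms(1)]] by (auto simp: admissible_def)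
  moreover have "fdim (Gamma_ht H F U) \<le> fdim (totE H F)"
    by (rule fs.dim_mono_fd[OF totE_fd[OF assms(1), of F]]) (auto simp: Gamma_ht_def)
  ultimately show ?thesis by (auto simp: excess_def)
qed

lemma excess_set_finite:
  assumes "gr H"
  shows "finite {excess H F U | U. admissible H F U}"
  by (rule finite_subset[OF _ finite_atLeastAtMost_int[of "- int (fdim (totV H F))" "int (fdim (totE H F))"]])
     (use excess_bounds[OF assms] in blast)

lemma excess_set_ne: "{excess H F U | U. admissible H F U} \<noteq> {}"
proof -
  have "admissible H F {0}" unfolding admissible_def by (auto simp: totV_def)
  then show ?thesis by blast
qed

lemma R1:
  fixes F :: "('v,'e,'k::field) sheaf"
  assumes "gr H" "valid H F U"
  shows "fexc H F U \<le> max_excess H F"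
proof -
  have "fexc H F U \<in> {excess H F U | U. admissible H F U}"
    using E1[OF assms] adm_dsum[OF assms] by force
  then show ?thesis unfolding max_excess_def by (rule Max_ge[OF excess_set_finite[OF assms(1)]])
qed

lemma R2:
  fixes F :: "('v,'e,'k::field) sheaf"
  assumes "gr H"
  shows "\<exists>U. valid H F U \<and> fexc H F U = max_excess H F"
proof -
  have "max_excess H F \<in> {excess H F U | U. admissible H F U}"
    unfolding max_excess_def using excess_set_finite[OF assms] excess_set_ne by (rule Max_in)
  then obtain U1 where U1: "admissible H F U1" "excess H F U1 = max_excess H F" by auto
  obtain U0 where "valid H F U0" "excess H F U1 \<le> fexc H F U0" using E2[OF assms U1(1)] by blast
  then show ?thesis using R1[OF assms, of F U0] U1 by (intro exI[of _ U0]) auto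
qed






section \<open>Pullbacks, automorphisms, supermodularity\<close>

lemma pb_simps [simp]:
  "vdim (pullback pv pe F) v = vdim F (pv v)"
  "edim (pullback pv pe F) e = edim F (pe e)"
  "rest_h (pullback pv pe F) e = rest_h F (pe e)"
  "rest_t (pullback pv pe F) e = rest_t F (pe e)"
  by (simp_all add: pullback_def)

lemma sum_fiber:
  fixes h :: "'b \<Rightarrow> int"
  assumes "finite S" "finite T" "\<psi> ` S \<subseteq> T" "\<forall>t\<in>T. card {s\<in>S. \<psi> s = t} = c"
  shows "(\<Sum>s\<in>S. h (\<psi> s)) = int c * (\<Sum>t\<in>T. h t)"
proof -
  have "(\<Sum>s\<in>S. h (\<psi> s)) = (\<Sum>t\<in>T. \<Sum>s\<in>{s\<in>S. \<psi> s = t}. h (\<psi> s))"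
    using sum.group[OF assms(1,2,3), of "\<lambda>s. h (\<psi> s)"] by simp
  also have "\<dots> = (\<Sum>t\<in>T. int c * h t)"
  proof (rule sum.cong[OF refl])
    fix t assume t: "t \<in> T"
    have "(\<Sum>s\<in>{s\<in>S. \<psi> s = t}. h (\<psi> s)) = (\<Sum>s\<in>{s\<in>S. \<psi> s = t}. h t)" by (rule sum.cong) auto
    also have "\<dots> = int c * h t" using assms(4) t by simp
    finally show "(\<Sum>s\<in>{s\<in>S. \<psi> s = t}. h (\<psi> s)) = int c * h t" .
  qed
  also have "\<dots> = int c * (\<Sum>t\<in>T. h t)" by (simp add: sum_distrib_left)
  finally show ?thesis .
qed

lemma Gam_cong:
  assumes "U (head H e) = U' (head H e)" "U (tail H e) = U' (tail H e)"
  shows "Gam H F U e = Gam H F U' e"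
  using assms by (simp add: Gam_def)

lemma fexc_cong:
  assumes "gr H" "\<forall>v\<in>verts H. U v = U' v"
  shows "fexc H F U = fexc H F U'"
proof -
  have "Gam H F U e = Gam H F U' e" if "e \<in> arcs H" for e
    by (rule Gam_cong) (use assms that in \<open>auto simp: gr_def\<close>)
  then show ?thesis unfolding fexc_def using assms(2) by simp
qed

lemma R3:
  fixes F :: "('v,'e,'k::field) sheaf" and H :: "('v,'e) pre_digraph" and H' :: "('v2,'e2) pre_digraph"
  assumes "gr H" "gr H'" "\<forall>v\<in>verts H'. pv v \<in> verts H"
    "\<forall>e\<in>arcs H'. pe e \<in> arcs H \<and> tail H (pe e) = pv (tail H' e) \<and> head H (pe e) = pv (head H' e)"
    "\<forall>v\<in>verts H. card {v'\<in>verts H'. pv v' = v} = c" "\<forall>e\<in>arcs H. card {e'\<in>arcs H'. pe e' = e} = c"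
    "valid H F U"
  shows "valid H' (pullback pv pe F) (\<lambda>v. U (pv v))"
    "fexc H' (pullback pv pe F) (\<lambda>v. U (pv v)) = int c * fexc H F U"
proof -
  show "valid H' (pullback pv pe F) (\<lambda>v. U (pv v))"
    using assms(3,7) by (auto simp: valid_def stalkV_def)
  have G: "Gam H' (pullback pv pe F) (\<lambda>v. U (pv v)) e = Gam H F U (pe e)" if "e \<in> arcs H'" for e
  proof -
    have "hv H' (pullback pv pe F) e = hv H F (pe e)" "tv H' (pullback pv pe F) e = tv H F (pe e)"
      using assms(4) that by (auto simp: hv_def tv_def fun_eq_iff)
    then show ?thesis using assms(4) that by (auto simp: Gam_def)
  qed
  have fin: "finite (verts H)" "finite (arcs H)" "finite (verts H')" "finite (arcs H')"
    using assms(1,2) by (auto simp: gr_def)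
  have "(\<Sum>e\<in>arcs H'. int (fdim (Gam H' (pullback pv pe F) (\<lambda>v. U (pv v)) e)))
      = (\<Sum>e\<in>arcs H'. int (fdim (Gam H F U (pe e))))" using G by simp
  also have "\<dots> = int c * (\<Sum>e\<in>arcs H. int (fdim (Gam H F U e)))"
    by (rule sum_fiber[OF fin(4) fin(2)]) (use assms(4,6) in auto)
  finally have A: "(\<Sum>e\<in>arcs H'. int (fdim (Gam H' (pullback pv pe F) (\<lambda>v. U (pv v)) e)))
      = int c * (\<Sum>e\<in>arcs H. int (fdim (Gam H F U e)))" .
  have B: "(\<Sum>v\<in>verts H'. int (fdim (U (pv v)))) = int c * (\<Sum>v\<in>verts H. int (fdim (U v)))"
    by (rule sum_fiber[OF fin(3) fin(1)]) (use assms(3,5) in auto)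
  show "fexc H' (pullback pv pe F) (\<lambda>v. U (pv v)) = int c * fexc H F U"
    unfolding fexc_def A B by (simp add: right_diff_distrib)
qed

lemma fexc_auto:
  fixes F :: "('v,'e,'k::field) sheaf"
  assumes "gr H" "bij_betw av (verts H) (verts H)" "bij_betw ae (arcs H) (arcs H)"
    "\<forall>e\<in>arcs H. tail H (ae e) = av (tail H e) \<and> head H (ae e) = av (head H e)"
    "\<forall>v\<in>verts H. vdim F (av v) = vdim F v"
    "\<forall>e\<in>arcs H. edim F (ae e) = edim F e \<and> rest_h F (ae e) = rest_h F e \<and> rest_t F (ae e) = rest_t F e"
    "valid H F U"
  shows "valid H F (\<lambda>v. U (av v))" "fexc H F (\<lambda>v. U (av v)) = fexc H F U"
proof -
  have avv: "av v \<in> verts H" if "v \<in> verts H" for v by (rule bij_betw_apply[OF assms(2) that])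
  show "valid H F (\<lambda>v. U (av v))"
    unfolding valid_def
  proof
    fix v assume v: "v \<in> verts H"
    have "stalkV F (av v) = stalkV F v" using assms(5) v by (simp add: stalkV_def)
    moreover have "fsubspace (U (av v))" "U (av v) \<subseteq> stalkV F (av v)"
      using assms(7) avv[OF v] unfolding valid_def by auto
    ultimately show "fsubspace (U (av v)) \<and> U (av v) \<subseteq> stalkV F v" by simp
  qed
  have G: "Gam H F (\<lambda>v. U (av v)) e = Gam H F U (ae e)" if "e \<in> arcs H" for e
  proof -
    have hv: "head H e \<in> verts H" "tail H e \<in> verts H" using assms(1) that by (auto simp: gr_def)
    have h: "head H (ae e) = av (head H e)" "tail H (ae e) = av (tail H e)" using assms(4) that by auto
    have vd: "vdim F (av (head H e)) = vdim F (head H e)" "vdim F (av (tail H e)) = vdim F (tail H e)"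
      using assms(5) hv by auto
    have ed: "edim F (ae e) = edim F e" "rest_h F (ae e) = rest_h F e" "rest_t F (ae e) = rest_t F e"
      using assms(6) that by auto
    have "hv H F (ae e) = hv H F e" "tv H F (ae e) = tv H F e"
      unfolding hv_def tv_def h vd ed by simp_all
    then show ?thesis unfolding Gam_def h ed by simp
  qed
  have "(\<Sum>e\<in>arcs H. int (fdim (Gam H F (\<lambda>v. U (av v)) e))) = (\<Sum>e\<in>arcs H. int (fdim (Gam H F U (ae e))))"
    using G by simp
  also have "\<dots> = (\<Sum>e\<in>arcs H. int (fdim (Gam H F U e)))"
    by (rule sum.reindex_bij_betw[OF assms(3)])
  finally have A: "(\<Sum>e\<in>arcs H. int (fdim (Gam H F (\<lambda>v. U (av v)) e))) = (\<Sum>e\<in>arcs H. int (fdim (Gam H F U e)))" .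
  have B: "(\<Sum>v\<in>verts H. int (fdim (U (av v)))) = (\<Sum>v\<in>verts H. int (fdim (U v)))"
    by (rule sum.reindex_bij_betw[OF assms(2)])
  show "fexc H F (\<lambda>v. U (av v)) = fexc H F U" unfolding fexc_def A B ..
qed

lemma fin_supp_add: "y \<in> fin_supp n \<Longrightarrow> z \<in> fin_supp n \<Longrightarrow> y + z \<in> fin_supp n"
  by (auto simp: fin_supp_def)

lemma supermod:
  fixes F :: "('v,'e,'k::field) sheaf"
  assumes "gr H" "valid H F U" "valid H F W"
  shows "valid H F (\<lambda>v. ssum (U v) (W v))" "valid H F (\<lambda>v. U v \<inter> W v)"
    "fexc H F U + fexc H F W \<le> fexc H F (\<lambda>v. ssum (U v) (W v)) + fexc H F (\<lambda>v. U v \<inter> W v)"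
proof -
  show vS: "valid H F (\<lambda>v. ssum (U v) (W v))"
    unfolding valid_def
  proof (intro ballI conjI)
    fix v assume v: "v \<in> verts H"
    have sU: "fsubspace (U v)" "U v \<subseteq> fin_supp (vdim F v)" using assms(2) v by (auto simp: valid_def stalkV_fin_supp)
    have sW: "fsubspace (W v)" "W v \<subseteq> fin_supp (vdim F v)" using assms(3) v by (auto simp: valid_def stalkV_fin_supp)
    show "fsubspace (ssum (U v) (W v))" unfolding ssum_def
      by (rule fs.subspace_sums[OF sU(1) sW(1)])
    show "ssum (U v) (W v) \<subseteq> stalkV F v"
    proof
      fix z assume "z \<in> ssum (U v) (W v)"
      then obtain x y where "z = x + y" "x \<in> U v" "y \<in> W v" unfolding ssum_def by blast
      then show "z \<in> stalkV F v" unfolding stalkV_fin_supp using sU(2) sW(2) fin_supp_add by blast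
    qed
  qed
  show vI: "valid H F (\<lambda>v. U v \<inter> W v)"
    unfolding valid_def
  proof
    fix v assume v: "v \<in> verts H"
    have sU: "fsubspace (U v)" "U v \<subseteq> stalkV F v" using assms(2) v by (auto simp: valid_def)
    have sW: "fsubspace (W v)" "W v \<subseteq> stalkV F v" using assms(3) v by (auto simp: valid_def)
    show "fsubspace (U v \<inter> W v) \<and> U v \<inter> W v \<subseteq> stalkV F v"
      using fs.subspace_inter[OF sU(1) sW(1)] sU(2) by blast
  qed
  let ?S = "\<lambda>v. ssum (U v) (W v)" and ?I = "\<lambda>v. U v \<inter> W v"
  have arcs: "int (fdim (Gam H F U e)) + int (fdim (Gam H F W e))
      \<le> int (fdim (Gam H F ?S e)) + int (fdim (Gam H F ?I e))" if e: "e \<in> arcs H" for e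
  proof -
    have sU: "fsubspace (Gam H F U e)" and sW: "fsubspace (Gam H F W e)"
      using Gam_subspace[OF assms(1) _ e] assms by auto
    have fU: "fd (Gam H F U e)" by (rule fd_mono[OF fin_supp_fd Gam_fin_supp])
    have fW: "fd (Gam H F W e)" by (rule fd_mono[OF fin_supp_fd Gam_fin_supp])
    have fS: "fd (Gam H F ?S e)" by (rule fd_mono[OF fin_supp_fd Gam_fin_supp])
    have I: "Gam H F ?I e = Gam H F U e \<inter> Gam H F W e" by (auto simp: Gam_def)
    have sub: "ssum (Gam H F U e) (Gam H F W e) \<subseteq> Gam H F ?S e"
    proof
      fix z assume "z \<in> ssum (Gam H F U e) (Gam H F W e)"
      then obtain x y where z: "z = x + y" and x: "x \<in> Gam H F U e" and y: "y \<in> Gam H F W e"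
        unfolding ssum_def by blast
      have "hv H F e z \<in> ssum (U (head H e)) (W (head H e))"
        using x y unfolding z hv_add ssum_def Gam_def by blast
      moreover have "tv H F e z \<in> ssum (U (tail H e)) (W (tail H e))"
        using x y unfolding z tv_add ssum_def Gam_def by blast
      moreover have "z \<in> fin_supp (edim F e)" using x y unfolding z Gam_def by (auto intro: fin_supp_add)
      ultimately show "z \<in> Gam H F ?S e" unfolding Gam_def by simp
    qed
    have "fdim (ssum (Gam H F U e) (Gam H F W e)) \<le> fdim (Gam H F ?S e)"
      by (rule fs.dim_mono_fd[OF fS sub])
    moreover have "fdim (ssum (Gam H F U e) (Gam H F W e)) + fdim (Gam H F U e \<inter> Gam H F W e)
        = fdim (Gam H F U e) + fdim (Gam H F W e)"
      using fs.dim_sum_int[OF sU fU sW fW] unfolding ssum_def .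
    ultimately show ?thesis unfolding I by linarith
  qed
  have verts: "int (fdim (U v)) + int (fdim (W v)) = int (fdim (?S v)) + int (fdim (?I v))"
    if v: "v \<in> verts H" for v
  proof -
    have sU: "fsubspace (U v)" and sW: "fsubspace (W v)" using assms v by (auto simp: valid_def)
    have "U v \<subseteq> fin_supp (vdim F v)" "W v \<subseteq> fin_supp (vdim F v)"
      using assms v by (auto simp: valid_def stalkV_fin_supp)
    then have fU: "fd (U v)" and fW: "fd (W v)" using fd_mono[OF fin_supp_fd] by blast+
    show ?thesis using fs.dim_sum_int[OF sU fU sW fW] unfolding ssum_def by linarith
  qed
  have "(\<Sum>e\<in>arcs H. int (fdim (Gam H F U e))) + (\<Sum>e\<in>arcs H. int (fdim (Gam H F W e)))
      \<le> (\<Sum>e\<in>arcs H. int (fdim (Gam H F ?S e))) + (\<Sum>e\<in>arcs H. int (fdim (Gam H F ?I e)))"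
    unfolding sum.distrib[symmetric] by (rule sum_mono) (rule arcs)
  moreover have "(\<Sum>v\<in>verts H. int (fdim (U v))) + (\<Sum>v\<in>verts H. int (fdim (W v)))
      = (\<Sum>v\<in>verts H. int (fdim (?S v))) + (\<Sum>v\<in>verts H. int (fdim (?I v)))"
    unfolding sum.distrib[symmetric] by (rule sum.cong[OF refl]) (rule verts)
  ultimately show "fexc H F U + fexc H F W \<le> fexc H F ?S + fexc H F ?I"
    unfolding fexc_def by linarith
qed




section \<open>The Galois-type cover\<close>

definition fibv :: "('v2,'e2) pre_digraph \<Rightarrow> ('v2 \<Rightarrow> 'v) \<Rightarrow> 'v \<Rightarrow> 'v2 set" where
  "fibv G' fv v = {v' \<in> verts G'. fv v' = v}"

definition fibe :: "('v2,'e2) pre_digraph \<Rightarrow> ('e2 \<Rightarrow> 'e) \<Rightarrow> 'e \<Rightarrow> 'e2 set" where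
  "fibe G' fe e = {e' \<in> arcs G'. fe e' = e}"

definition GG :: "('v2,'e2) pre_digraph \<Rightarrow> ('v,'e) pre_digraph \<Rightarrow> ('v2 \<Rightarrow> 'v) \<Rightarrow> ('e2 \<Rightarrow> 'e)
    \<Rightarrow> ('v \<times> 'v2 list, 'e \<times> 'e2 list) pre_digraph" where
  "GG G' G fv fe = \<lparr>verts = Sigma (verts G) (\<lambda>v. permutations_of_set (fibv G' fv v)),
     arcs = Sigma (arcs G) (\<lambda>e. permutations_of_set (fibe G' fe e)),
     tail = (\<lambda>x. (tail G (fst x), map (tail G') (snd x))),
     head = (\<lambda>x. (head G (fst x), map (head G') (snd x)))\<rparr>"

lemma GG_simps [simp]:
  "verts (GG G' G fv fe) = Sigma (verts G) (\<lambda>v. permutations_of_set (fibv G' fv v))"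
  "arcs (GG G' G fv fe) = Sigma (arcs G) (\<lambda>e. permutations_of_set (fibe G' fe e))"
  "tail (GG G' G fv fe) x = (tail G (fst x), map (tail G') (snd x))"
  "head (GG G' G fv fe) x = (head G (fst x), map (head G') (snd x))"
  by (simp_all add: GG_def)

lemma LS:
  assumes "distinct xs" "length xs = d"
  shows "(\<Sum>i<d. f (xs ! i)) = (\<Sum>y\<in>set xs. f y)"
  using sum.reindex_bij_betw[OF bij_betw_nth[OF assms(1) refl refl], of f] assms(2) by simp

context
  fixes G :: "('v,'e) pre_digraph" and G' :: "('v2,'e2) pre_digraph"
    and fv :: "'v2 \<Rightarrow> 'v" and fe :: "'e2 \<Rightarrow> 'e" and d :: nat
  assumes gG: "gr G" and gG': "gr G'" and cov: "covering_map G' G fv fe"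
    and cv: "\<forall>v\<in>verts G. card {v'\<in>verts G'. fv v' = v} = d"
    and ce: "\<forall>e\<in>arcs G. card {e'\<in>arcs G'. fe e' = e} = d"
begin

lemma cov_v: "v' \<in> verts G' \<Longrightarrow> fv v' \<in> verts G"
  using cov by (simp add: covering_map_def)

lemma cov_e: "e' \<in> arcs G' \<Longrightarrow> fe e' \<in> arcs G \<and> tail G (fe e') = fv (tail G' e') \<and> head G (fe e') = fv (head G' e')"
  using cov by (simp add: covering_map_def)

lemma cov_bij: "v \<in> verts G' \<Longrightarrow> bij_betw fe {x\<in>arcs G'. head G' x = v} {x\<in>arcs G. head G x = fv v}
     \<and> bij_betw fe {x\<in>arcs G'. tail G' x = v} {x\<in>arcs G. tail G x = fv v}"
  using cov by (simp add: covering_map_def)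

lemma tail_bij:
  assumes "e \<in> arcs G"
  shows "bij_betw (tail G') (fibe G' fe e) (fibv G' fv (tail G e))"
proof -
  have inj: "inj_on (tail G') (fibe G' fe e)"
  proof (rule inj_onI)
    fix a b assume a: "a \<in> fibe G' fe e" and b: "b \<in> fibe G' fe e" and ab: "tail G' a = tail G' b"
    have v: "tail G' a \<in> verts G'" using a gG' by (auto simp: fibe_def gr_def)
    have "inj_on fe {x \<in> arcs G'. tail G' x = tail G' a}" using cov_bij[OF v] by (auto simp: bij_betw_def)
    then show "a = b" using a b ab unfolding fibe_def inj_on_def by auto
  qed
  have img: "tail G' ` fibe G' fe e = fibv G' fv (tail G e)"
  proof
    show "tail G' ` fibe G' fe e \<subseteq> fibv G' fv (tail G e)"
      using gG' cov_e by (auto simp: fibe_def fibv_def gr_def)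
    show "fibv G' fv (tail G e) \<subseteq> tail G' ` fibe G' fe e"
    proof
      fix v' assume v': "v' \<in> fibv G' fv (tail G e)"
      then have v'': "v' \<in> verts G'" "fv v' = tail G e" by (auto simp: fibv_def)
      have "fe ` {x \<in> arcs G'. tail G' x = v'} = {x \<in> arcs G. tail G x = fv v'}"
        using cov_bij[OF v''(1)] by (simp add: bij_betw_def)
      then have "e \<in> fe ` {x \<in> arcs G'. tail G' x = v'}" using assms v''(2) by simp
      then obtain a where "a \<in> arcs G'" "tail G' a = v'" "e = fe a" by blast
      then show "v' \<in> tail G' ` fibe G' fe e" by (auto simp: fibe_def)
    qed
  qed
  show ?thesis using inj img by (simp add: bij_betw_def)
qed

lemma head_bij:
  assumes "e \<in> arcs G"
  shows "bij_betw (head G') (fibe G' fe e) (fibv G' fv (head G e))"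
proof -
  have inj: "inj_on (head G') (fibe G' fe e)"
  proof (rule inj_onI)
    fix a b assume a: "a \<in> fibe G' fe e" and b: "b \<in> fibe G' fe e" and ab: "head G' a = head G' b"
    have v: "head G' a \<in> verts G'" using a gG' by (auto simp: fibe_def gr_def)
    have "inj_on fe {x \<in> arcs G'. head G' x = head G' a}" using cov_bij[OF v] by (auto simp: bij_betw_def)
    then show "a = b" using a b ab unfolding fibe_def inj_on_def by auto
  qed
  have img: "head G' ` fibe G' fe e = fibv G' fv (head G e)"
  proof
    show "head G' ` fibe G' fe e \<subseteq> fibv G' fv (head G e)"
      using gG' cov_e by (auto simp: fibe_def fibv_def gr_def)
    show "fibv G' fv (head G e) \<subseteq> head G' ` fibe G' fe e"
    proof
      fix v' assume v': "v' \<in> fibv G' fv (head G e)"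
      then have v'': "v' \<in> verts G'" "fv v' = head G e" by (auto simp: fibv_def)
      have "fe ` {x \<in> arcs G'. head G' x = v'} = {x \<in> arcs G. head G x = fv v'}"
        using cov_bij[OF v''(1)] by (simp add: bij_betw_def)
      then have "e \<in> fe ` {x \<in> arcs G'. head G' x = v'}" using assms v''(2) by simp
      then obtain a where "a \<in> arcs G'" "head G' a = v'" "e = fe a" by blast
      then show "v' \<in> head G' ` fibe G' fe e" by (auto simp: fibe_def)
    qed
  qed
  show ?thesis using inj img by (simp add: bij_betw_def)
qed

lemma fin_fibv: "finite (fibv G' fv v)"
  using gG' by (auto simp: fibv_def gr_def)

lemma fin_fibe: "finite (fibe G' fe e)"
  using gG' by (auto simp: fibe_def gr_def)

lemma card_fibv: "v \<in> verts G \<Longrightarrow> card (fibv G' fv v) = d"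
  using cv by (simp add: fibv_def)

lemma card_fibe: "e \<in> arcs G \<Longrightarrow> card (fibe G' fe e) = d"
  using ce by (simp add: fibe_def)

lemma perm_map:
  assumes "e \<in> arcs G" "\<epsilon> \<in> permutations_of_set (fibe G' fe e)"
  shows "map (tail G') \<epsilon> \<in> permutations_of_set (fibv G' fv (tail G e))"
    "map (head G') \<epsilon> \<in> permutations_of_set (fibv G' fv (head G e))"
proof -
  have s: "set \<epsilon> = fibe G' fe e" "distinct \<epsilon>" using assms(2) by (auto simp: permutations_of_set_def)
  show "map (tail G') \<epsilon> \<in> permutations_of_set (fibv G' fv (tail G e))"
    using tail_bij[OF assms(1)] s by (auto simp: permutations_of_set_def bij_betw_def distinct_map)
  show "map (head G') \<epsilon> \<in> permutations_of_set (fibv G' fv (head G e))"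
    using head_bij[OF assms(1)] s by (auto simp: permutations_of_set_def bij_betw_def distinct_map)
qed

lemma gr_GG: "gr (GG G' G fv fe)"
  unfolding gr_def
proof (intro conjI ballI)
  show "finite (verts (GG G' G fv fe))" using gG by (auto simp: gr_def)
  show "finite (arcs (GG G' G fv fe))" using gG by (auto simp: gr_def)
next
  fix x assume x: "x \<in> arcs (GG G' G fv fe)"
  then have e: "fst x \<in> arcs G" "snd x \<in> permutations_of_set (fibe G' fe (fst x))" by auto
  show "tail (GG G' G fv fe) x \<in> verts (GG G' G fv fe)"
    using perm_map(1)[OF e] e(1) gG by (auto simp: gr_def)
  show "head (GG G' G fv fe) x \<in> verts (GG G' G fv fe)"
    using perm_map(2)[OF e] e(1) gG by (auto simp: gr_def)
qed

lemma len_v: "x \<in> verts (GG G' G fv fe) \<Longrightarrow> length (snd x) = d"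
  using length_finite_permutations_of_set card_fibv by force

lemma len_e: "x \<in> arcs (GG G' G fv fe) \<Longrightarrow> length (snd x) = d"
  using length_finite_permutations_of_set card_fibe by force

lemma GG_fiber_v: "v \<in> verts G \<Longrightarrow> card {x \<in> verts (GG G' G fv fe). fst x = v} = fact d"
proof -
  assume v: "v \<in> verts G"
  have "{x \<in> verts (GG G' G fv fe). fst x = v} = {v} \<times> permutations_of_set (fibv G' fv v)"
    using v by auto
  then show ?thesis using card_fibv[OF v] fin_fibv by (simp add: card_cartesian_product_singleton)
qed

lemma GG_fiber_e: "e \<in> arcs G \<Longrightarrow> card {x \<in> arcs (GG G' G fv fe). fst x = e} = fact d"
proof -
  assume e: "e \<in> arcs G"
  have "{x \<in> arcs (GG G' G fv fe). fst x = e} = {e} \<times> permutations_of_set (fibe G' fe e)"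
    using e by auto
  then show ?thesis using card_fibe[OF e] fin_fibe by (simp add: card_cartesian_product_singleton)
qed

lemma R3_GG:
  fixes F :: "('v,'e,'k::field) sheaf"
  assumes "valid G F Z"
  shows "valid (GG G' G fv fe) (pullback fst fst F) (\<lambda>x. Z (fst x))"
    "fexc (GG G' G fv fe) (pullback fst fst F) (\<lambda>x. Z (fst x)) = int (fact d) * fexc G F Z"
  using R3[OF gG gr_GG, of fst fst "fact d" F Z] assms GG_fiber_v GG_fiber_e by auto

end




context
  fixes G :: "('v,'e) pre_digraph" and G' :: "('v2,'e2) pre_digraph"
    and fv :: "'v2 \<Rightarrow> 'v" and fe :: "'e2 \<Rightarrow> 'e" and d :: nat
  assumes gG: "gr G" and gG': "gr G'" and cov: "covering_map G' G fv fe"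
    and cv: "\<forall>v\<in>verts G. card {v'\<in>verts G'. fv v' = v} = d"
    and ce: "\<forall>e\<in>arcs G. card {e'\<in>arcs G'. fe e' = e} = d"
begin

lemma lower_GG:
  fixes F :: "('v,'e,'k::field) sheaf"
  assumes U': "valid G' (pullback fv fe F) U'"
  shows "int (fact d) * fexc G' (pullback fv fe F) U'
     \<le> int d * max_excess (GG G' G fv fe) (pullback fst fst F)"
proof -
  let ?H = "GG G' G fv fe" and ?F2 = "pullback fst fst F" and ?F' = "pullback fv fe F"
  note lens = len_v[OF gG gG' cov cv ce] len_e[OF gG gG' cov cv ce]
  note fibs = GG_fiber_v[OF gG gG' cov cv ce] GG_fiber_e[OF gG gG' cov cv ce]
  have grH: "gr ?H" by (rule gr_GG[OF gG gG' cov cv ce])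
  define Ui where "Ui i x = U' (snd x ! i)" for i :: nat and x :: "'v \<times> 'v2 list"
  have vUi: "valid ?H ?F2 (Ui i)" if i: "i < d" for i
    unfolding valid_def
  proof
    fix x assume x: "x \<in> verts ?H"
    obtain v \<sigma> where xv: "x = (v,\<sigma>)" by (cases x)
    have v: "v \<in> verts G" "\<sigma> \<in> permutations_of_set (fibv G' fv v)" using x xv by auto
    have "length \<sigma> = d" using lens(1)[OF x] xv by simp
    then have "\<sigma> ! i \<in> set \<sigma>" using i by simp
    then have si: "\<sigma> ! i \<in> verts G'" "fv (\<sigma> ! i) = v" using v(2) by (auto simp: permutations_of_set_def fibv_def)
    have st: "stalkV ?F' (\<sigma> ! i) = stalkV ?F2 x" using si xv by (simp add: stalkV_def)
    show "fsubspace (Ui i x) \<and> Ui i x \<subseteq> stalkV ?F2 x"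
      using U' si(1) st xv unfolding valid_def Ui_def by auto
  qed
  have Gi: "Gam ?H ?F2 (Ui i) x = Gam G' ?F' U' (snd x ! i)" if i: "i < d" and x: "x \<in> arcs ?H" for i x
  proof -
    obtain e \<epsilon> where xe: "x = (e,\<epsilon>)" by (cases x)
    have e: "e \<in> arcs G" "\<epsilon> \<in> permutations_of_set (fibe G' fe e)" using x xe by auto
    have len: "length \<epsilon> = d" using lens(2)[OF x] xe by simp
    then have "\<epsilon> ! i \<in> set \<epsilon>" using i by simp
    then have ei: "\<epsilon> ! i \<in> arcs G'" "fe (\<epsilon> ! i) = e" using e(2) by (auto simp: permutations_of_set_def fibe_def)
    have ce': "tail G e = fv (tail G' (\<epsilon> ! i))" "head G e = fv (head G' (\<epsilon> ! i))"
      using cov_e[OF gG gG' cov cv ce ei(1)] ei(2) by auto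
    have "hv ?H ?F2 x = hv G' ?F' (\<epsilon> ! i)" "tv ?H ?F2 x = tv G' ?F' (\<epsilon> ! i)"
      using xe ce' ei(2) by (auto simp: hv_def tv_def fun_eq_iff)
    moreover have "Ui i (head ?H x) = U' (head G' (\<epsilon> ! i))" "Ui i (tail ?H x) = U' (tail G' (\<epsilon> ! i))"
      using xe len i by (auto simp: Ui_def)
    moreover have "edim ?F2 x = edim ?F' (\<epsilon> ! i)" using xe ei(2) by simp
    ultimately show ?thesis using xe by (simp add: Gam_def)
  qed
  have finH: "finite (arcs ?H)" "finite (verts ?H)" using grH by (auto simp: gr_def)
  have finG: "finite (arcs G)" "finite (verts G)" "finite (arcs G')" "finite (verts G')"
    using gG gG' by (auto simp: gr_def)
  let ?g = "\<lambda>e'. int (fdim (Gam G' ?F' U' e'))"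
  have arcsum: "(\<Sum>i<d. \<Sum>x\<in>arcs ?H. int (fdim (Gam ?H ?F2 (Ui i) x)))
      = int (fact d) * (\<Sum>e'\<in>arcs G'. ?g e')"
  proof -
    have "(\<Sum>i<d. \<Sum>x\<in>arcs ?H. int (fdim (Gam ?H ?F2 (Ui i) x))) = (\<Sum>i<d. \<Sum>x\<in>arcs ?H. ?g (snd x ! i))"
      by (intro sum.cong refl) (simp add: Gi)
    also have "\<dots> = (\<Sum>x\<in>arcs ?H. \<Sum>i<d. ?g (snd x ! i))" by (rule sum.swap)
    also have "\<dots> = (\<Sum>x\<in>arcs ?H. (\<lambda>e. \<Sum>e'\<in>fibe G' fe e. ?g e') (fst x))"
    proof (rule sum.cong[OF refl])
      fix x assume x: "x \<in> arcs ?H"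
      have p: "snd x \<in> permutations_of_set (fibe G' fe (fst x))" using x by auto
      show "(\<Sum>i<d. ?g (snd x ! i)) = (\<lambda>e. \<Sum>e'\<in>fibe G' fe e. ?g e') (fst x)"
        using LS[of "snd x" d ?g] p lens(2)[OF x] by (simp add: permutations_of_set_def)
    qed
    also have "\<dots> = int (fact d) * (\<Sum>e\<in>arcs G. \<Sum>e'\<in>fibe G' fe e. ?g e')"
      by (rule sum_fiber[OF finH(1) finG(1)]) (use fibs(2) in auto)
    also have "(\<Sum>e\<in>arcs G. \<Sum>e'\<in>fibe G' fe e. ?g e') = (\<Sum>e'\<in>arcs G'. ?g e')"
      unfolding fibe_def
      by (rule sum.group[OF finG(3) finG(1)]) (use cov_e[OF gG gG' cov cv ce] in auto)
    finally show ?thesis .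
  qed
  let ?h = "\<lambda>v'. int (fdim (U' v'))"
  have vertsum: "(\<Sum>i<d. \<Sum>x\<in>verts ?H. int (fdim (Ui i x)))
      = int (fact d) * (\<Sum>v'\<in>verts G'. ?h v')"
  proof -
    have "(\<Sum>i<d. \<Sum>x\<in>verts ?H. int (fdim (Ui i x))) = (\<Sum>x\<in>verts ?H. \<Sum>i<d. ?h (snd x ! i))"
      unfolding Ui_def by (rule sum.swap)
    also have "\<dots> = (\<Sum>x\<in>verts ?H. (\<lambda>v. \<Sum>v'\<in>fibv G' fv v. ?h v') (fst x))"
    proof (rule sum.cong[OF refl])
      fix x assume x: "x \<in> verts ?H"
      have p: "snd x \<in> permutations_of_set (fibv G' fv (fst x))" using x by auto
      show "(\<Sum>i<d. ?h (snd x ! i)) = (\<lambda>v. \<Sum>v'\<in>fibv G' fv v. ?h v') (fst x)"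
        using LS[of "snd x" d ?h] p lens(1)[OF x] by (simp add: permutations_of_set_def)
    qed
    also have "\<dots> = int (fact d) * (\<Sum>v\<in>verts G. \<Sum>v'\<in>fibv G' fv v. ?h v')"
      by (rule sum_fiber[OF finH(2) finG(2)]) (use fibs(1) in auto)
    also have "(\<Sum>v\<in>verts G. \<Sum>v'\<in>fibv G' fv v. ?h v') = (\<Sum>v'\<in>verts G'. ?h v')"
      unfolding fibv_def
      by (rule sum.group[OF finG(4) finG(2)]) (use cov_v[OF gG gG' cov cv ce] in auto)
    finally show ?thesis .
  qed
  have "(\<Sum>i<d. fexc ?H ?F2 (Ui i)) = int (fact d) * fexc G' ?F' U'"
    unfolding fexc_def sum_subtractf arcsum vertsum by (simp add: right_diff_distrib)
  moreover have "(\<Sum>i<d. fexc ?H ?F2 (Ui i)) \<le> of_nat (card {..<d}) * max_excess ?H ?F2"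
    by (rule sum_bounded_above) (use R1[OF grH vUi] in auto)
  ultimately show ?thesis by simp
qed

end




definition permv :: "(nat \<Rightarrow> nat) \<Rightarrow> 'a \<times> 'b list \<Rightarrow> 'a \<times> 'b list" where
  "permv p x = (fst x, permute_list p (snd x))"

lemma PL:
  assumes "p permutes {..<length \<sigma>}" "\<sigma> \<in> permutations_of_set A"
  shows "permute_list p \<sigma> \<in> permutations_of_set A"
proof -
  have m: "mset (permute_list p \<sigma>) = mset \<sigma>" using assms(1) by simp
  then have s: "set (permute_list p \<sigma>) = set \<sigma>" by (rule mset_eq_setD)
  have "card (set (permute_list p \<sigma>)) = length (permute_list p \<sigma>)"
    using s assms(2) distinct_card[of \<sigma>] by (simp add: permutations_of_set_def)
  then have "distinct (permute_list p \<sigma>)" by (rule card_distinct)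
  then show ?thesis using s assms(2) by (simp add: permutations_of_set_def)
qed

lemma permv_bij:
  assumes "p permutes {..<d}" "\<forall>a\<in>A. card (P a) = d"
  shows "bij_betw (permv p) (Sigma A (\<lambda>a. permutations_of_set (P a))) (Sigma A (\<lambda>a. permutations_of_set (P a)))"
proof (rule bij_betw_byWitness[where f'="permv (inv p)"])
  let ?S = "Sigma A (\<lambda>a. permutations_of_set (P a))"
  have len: "length (snd x) = d" if "x \<in> ?S" for x
    using that assms(2) length_finite_permutations_of_set by force
  have ip: "inv p permutes {..<d}" using permutes_inv[OF assms(1)] .
  show "\<forall>a\<in>?S. permv (inv p) (permv p a) = a"
  proof
    fix x assume x: "x \<in> ?S"
    have "permute_list (inv p) (permute_list p (snd x)) = permute_list (p \<circ> inv p) (snd x)"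
      using permute_list_compose[of "inv p" "snd x" p] ip len[OF x] by simp
    also have "\<dots> = snd x" using permutes_inv_o(1)[OF assms(1)] by simp
    finally show "permv (inv p) (permv p x) = x" by (simp add: permv_def)
  qed
  show "\<forall>a\<in>?S. permv p (permv (inv p) a) = a"
  proof
    fix x assume x: "x \<in> ?S"
    have "permute_list p (permute_list (inv p) (snd x)) = permute_list (inv p \<circ> p) (snd x)"
      using permute_list_compose[of p "snd x" "inv p"] assms(1) len[OF x] by simp
    also have "\<dots> = snd x" using permutes_inv_o(2)[OF assms(1)] by simp
    finally show "permv p (permv (inv p) x) = x" by (simp add: permv_def)
  qed
  show "permv p ` ?S \<subseteq> ?S"
  proof
    fix y assume "y \<in> permv p ` ?S"
    then obtain x where x: "x \<in> ?S" "y = permv p x" by blast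
    have "permute_list p (snd x) \<in> permutations_of_set (P (fst x))"
      using PL[of p "snd x"] x assms(1) len[OF x(1)] by auto
    then show "y \<in> ?S" using x by (auto simp: permv_def)
  qed
  show "permv (inv p) ` ?S \<subseteq> ?S"
  proof
    fix y assume "y \<in> permv (inv p) ` ?S"
    then obtain x where x: "x \<in> ?S" "y = permv (inv p) x" by blast
    have "permute_list (inv p) (snd x) \<in> permutations_of_set (P (fst x))"
      using PL[of "inv p" "snd x"] x ip len[OF x(1)] by auto
    then show "y \<in> ?S" using x by (auto simp: permv_def)
  qed
qed

context
  fixes G :: "('v,'e) pre_digraph" and G' :: "('v2,'e2) pre_digraph"
    and fv :: "'v2 \<Rightarrow> 'v" and fe :: "'e2 \<Rightarrow> 'e" and d :: nat
  assumes gG: "gr G" and gG': "gr G'" and cov: "covering_map G' G fv fe"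
    and cv: "\<forall>v\<in>verts G. card {v'\<in>verts G'. fv v' = v} = d"
    and ce: "\<forall>e\<in>arcs G. card {e'\<in>arcs G'. fe e' = e} = d"
begin

lemma auto_GG:
  fixes F :: "('v,'e,'k::field) sheaf"
  assumes p: "p permutes {..<d}" and U: "valid (GG G' G fv fe) (pullback fst fst F) U"
  shows "valid (GG G' G fv fe) (pullback fst fst F) (\<lambda>x. U (permv p x))"
    "fexc (GG G' G fv fe) (pullback fst fst F) (\<lambda>x. U (permv p x)) = fexc (GG G' G fv fe) (pullback fst fst F) U"
proof -
  let ?H = "GG G' G fv fe" and ?F2 = "pullback fst fst F :: ('v \<times> 'v2 list, 'e \<times> 'e2 list, 'k) sheaf"
  note lens = len_v[OF gG gG' cov cv ce] len_e[OF gG gG' cov cv ce]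
  have grH: "gr ?H" by (rule gr_GG[OF gG gG' cov cv ce])
  have bv: "bij_betw (permv p) (verts ?H) (verts ?H)"
    unfolding GG_simps by (rule permv_bij[OF p]) (use card_fibv[OF gG gG' cov cv ce] in auto)
  have be: "bij_betw (permv p) (arcs ?H) (arcs ?H)"
    unfolding GG_simps by (rule permv_bij[OF p]) (use card_fibe[OF gG gG' cov cv ce] in auto)
  have th: "\<forall>e\<in>arcs ?H. tail ?H (permv p e) = permv p (tail ?H e) \<and> head ?H (permv p e) = permv p (head ?H e)"
  proof
    fix x assume x: "x \<in> arcs ?H"
    have pp: "p permutes {..<length (snd x)}" using p lens(2)[OF x] by simp
    show "tail ?H (permv p x) = permv p (tail ?H x) \<and> head ?H (permv p x) = permv p (head ?H x)"
    proof -
      have a: "permute_list p (map (tail G') (snd x)) = map (tail G') (permute_list p (snd x))"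
        by (rule permute_list_map[OF pp])
      have b: "permute_list p (map (head G') (snd x)) = map (head G') (permute_list p (snd x))"
        by (rule permute_list_map[OF pp])
      show ?thesis by (simp add: permv_def a b)
    qed
  qed
  show "valid ?H ?F2 (\<lambda>x. U (permv p x))" "fexc ?H ?F2 (\<lambda>x. U (permv p x)) = fexc ?H ?F2 U"
    using fexc_auto[OF grH bv be th _ _ U] by (simp_all add: permv_def)
qed

lemma upper_GG:
  fixes F :: "('v,'e,'k::field) sheaf"
  shows "max_excess (GG G' G fv fe) (pullback fst fst F) \<le> int (fact d) * max_excess G F"
proof -
  let ?H = "GG G' G fv fe" and ?F2 = "pullback fst fst F :: ('v \<times> 'v2 list, 'e \<times> 'e2 list, 'k) sheaf"
  have grH: "gr ?H" by (rule gr_GG[OF gG gG' cov cv ce])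
  note lens = len_v[OF gG gG' cov cv ce] len_e[OF gG gG' cov cv ce]
  define M where "M = max_excess ?H ?F2"
  define td where "td U = (\<Sum>x\<in>verts ?H. fdim (U x :: (nat \<Rightarrow> 'k) set))" for U
  define MX where "MX = {U. valid ?H ?F2 U \<and> fexc ?H ?F2 U = M}"
  obtain U0 where U0: "U0 \<in> MX" using R2[OF grH, of ?F2] by (auto simp: MX_def M_def)
  define b where "b = (\<Sum>x\<in>verts ?H. fdim (stalkV ?F2 x))"
  have tdb: "td U < b + 1" if "U \<in> MX" for U
  proof -
    have "td U \<le> b"
      unfolding td_def b_def
    proof (rule sum_mono)
      fix x assume x: "x \<in> verts ?H"
      have vU: "valid ?H ?F2 U" using that by (simp add: MX_def)
      have "U x \<subseteq> stalkV ?F2 x" using vU x unfolding valid_def by blast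
      then show "fdim (U x) \<le> fdim (stalkV ?F2 x)"
        by (intro fs.dim_mono_fd) (auto simp: stalkV_fin_supp intro: fin_supp_fd)
    qed
    then show ?thesis by simp
  qed
  obtain Us where Us: "Us \<in> MX" and Umax: "\<And>U. U \<in> MX \<Longrightarrow> td U \<le> td Us"
    using Lattices_Big.ex_has_greatest_nat[of "\<lambda>U. U \<in> MX" U0 td "b + 1"] U0 tdb by blast
  have vUs: "valid ?H ?F2 Us" and fUs: "fexc ?H ?F2 Us = M" using Us by (auto simp: MX_def)
  have key: "Us (permv p x) \<subseteq> Us x" if p: "p permutes {..<d}" and x: "x \<in> verts ?H" for p x
  proof -
    define Ua where "Ua = (\<lambda>x. Us (permv p x))"
    have vUa: "valid ?H ?F2 Ua" and fUa: "fexc ?H ?F2 Ua = M"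
      using auto_GG[OF p vUs] fUs by (auto simp: Ua_def)
    define S where "S = (\<lambda>x. ssum (Us x) (Ua x))"
    define I where "I = (\<lambda>x. Us x \<inter> Ua x)"
    have vS: "valid ?H ?F2 S" and vI: "valid ?H ?F2 I"
      and sm: "fexc ?H ?F2 Us + fexc ?H ?F2 Ua \<le> fexc ?H ?F2 S + fexc ?H ?F2 I"
      using supermod[OF grH vUs vUa] by (simp_all add: S_def I_def)
    have "fexc ?H ?F2 S \<le> M" "fexc ?H ?F2 I \<le> M" using R1[OF grH vS] R1[OF grH vI] by (simp_all add: M_def)
    then have "fexc ?H ?F2 S = M" using sm fUs fUa by linarith
    then have "S \<in> MX" using vS by (simp add: MX_def)
    then have tdS: "td S \<le> td Us" by (rule Umax)
    have subs: "Us y \<subseteq> S y" "Ua y \<subseteq> S y" if y: "y \<in> verts ?H" for y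
    proof -
      have z: "0 \<in> Ua y" "0 \<in> Us y" using valid_0[OF vUa] valid_0[OF vUs] y by auto
      show "Us y \<subseteq> S y"
      proof
        fix a assume "a \<in> Us y"
        then have "a + 0 \<in> S y" unfolding S_def ssum_def using \<open>0 \<in> Ua y\<close> by blast
        then show "a \<in> S y" by simp
      qed
      show "Ua y \<subseteq> S y"
      proof
        fix a assume "a \<in> Ua y"
        then have "0 + a \<in> S y" unfolding S_def ssum_def using \<open>0 \<in> Us y\<close> by blast
        then show "a \<in> S y" by simp
      qed
    qed
    have fdS: "fd (S y)" if y: "y \<in> verts ?H" for y
    proof -
      have "S y \<subseteq> stalkV ?F2 y" using vS y unfolding valid_def by blast
      then have "S y \<subseteq> fin_supp (vdim ?F2 y)" by (simp only: stalkV_fin_supp)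
      then show ?thesis using fd_mono[OF fin_supp_fd] by blast
    qed
    have le: "fdim (Us y) \<le> fdim (S y)" if y: "y \<in> verts ?H" for y
      by (rule fs.dim_mono_fd[OF fdS[OF y] subs(1)[OF y]])
    have "td Us \<le> td S" unfolding td_def by (rule sum_mono) (rule le)
    then have "td Us = td S" using tdS by simp
    then have tdeq: "(\<Sum>y\<in>verts ?H. fdim (Us y)) = (\<Sum>y\<in>verts ?H. fdim (S y))" by (simp add: td_def)
    have finV: "finite (verts ?H)" using grH by (simp add: gr_def)
    have eq: "fdim (Us x) = fdim (S x)"
      by (rule sum_mono_inv[OF tdeq le x finV])
    have sUs: "fsubspace (Us x)" using vUs x unfolding valid_def by blast
    have "S x \<subseteq> Us x" by (rule fs.subspace_eq_dim[OF sUs fdS[OF x] subs(1)[OF x]]) (simp add: eq)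
    then show ?thesis using subs(2)[OF x] by (auto simp: Ua_def)
  qed
  have const: "Us (v,\<rho>) = Us (v,\<sigma>)" if s: "(v,\<sigma>) \<in> verts ?H" and r: "(v,\<rho>) \<in> verts ?H" for v \<sigma> \<rho>
  proof -
    have dist: "distinct \<sigma>" "distinct \<rho>" "set \<sigma> = set \<rho>" using s r by (auto simp: permutations_of_set_def)
    then have ms: "mset \<rho> = mset \<sigma>" using set_eq_iff_mset_eq_distinct[of \<rho> \<sigma>] by simp
    have ls: "length \<sigma> = d" "length \<rho> = d" using lens(1)[OF s] lens(1)[OF r] by auto
    obtain p1 where p1: "p1 permutes {..<length \<sigma>}" "permute_list p1 \<sigma> = \<rho>"
      using mset_eq_permutation[OF ms] by blast
    obtain p2 where p2: "p2 permutes {..<length \<rho>}" "permute_list p2 \<rho> = \<sigma>"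
      using mset_eq_permutation[OF ms[symmetric]] by blast
    have p1': "p1 permutes {..<d}" using p1(1) ls(1) by simp
    have p2': "p2 permutes {..<d}" using p2(1) ls(2) by simp
    have a: "Us (v,\<rho>) \<subseteq> Us (v,\<sigma>)" using key[OF p1' s] p1(2) by (simp add: permv_def)
    have b: "Us (v,\<sigma>) \<subseteq> Us (v,\<rho>)" using key[OF p2' r] p2(2) by (simp add: permv_def)
    show ?thesis using a b by (rule subset_antisym)
  qed
  define Z where "Z v = Us (v, SOME \<sigma>. \<sigma> \<in> permutations_of_set (fibv G' fv v))" for v
  have some: "(SOME \<sigma>. \<sigma> \<in> permutations_of_set (fibv G' fv v)) \<in> permutations_of_set (fibv G' fv v)" for v
  proof -
    have "permutations_of_set (fibv G' fv v) \<noteq> {}" using fin_fibv[OF gG gG' cov cv ce] by simp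
    then obtain \<sigma> where "\<sigma> \<in> permutations_of_set (fibv G' fv v)" by blast
    then show ?thesis by (rule someI)
  qed
  have ZU: "\<forall>x\<in>verts ?H. Us x = Z (fst x)"
  proof
    fix x assume x: "x \<in> verts ?H"
    obtain v \<sigma> where xv: "x = (v,\<sigma>)" by (cases x)
    have v: "v \<in> verts G" using x xv by simp
    have sv: "(v, SOME \<sigma>. \<sigma> \<in> permutations_of_set (fibv G' fv v)) \<in> verts ?H" using v some by simp
    have "x \<in> verts ?H" by (rule x)
    then have "Us (v,\<sigma>) = Us (v, SOME \<sigma>. \<sigma> \<in> permutations_of_set (fibv G' fv v))"
      using const[OF sv] xv by simp
    then show "Us x = Z (fst x)" using xv by (simp add: Z_def)
  qed
  have vZ: "valid G F Z"
    unfolding valid_def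
  proof
    fix v assume v: "v \<in> verts G"
    let ?x = "(v, SOME \<sigma>. \<sigma> \<in> permutations_of_set (fibv G' fv v))"
    have x: "?x \<in> verts ?H" using v some by simp
    have st: "stalkV ?F2 ?x = stalkV F v" by (simp add: stalkV_def)
    have "fsubspace (Us ?x) \<and> Us ?x \<subseteq> stalkV ?F2 ?x" using vUs x unfolding valid_def by blast
    then show "fsubspace (Z v) \<and> Z v \<subseteq> stalkV F v" unfolding Z_def st .
  qed
  have "M = fexc ?H ?F2 (\<lambda>x. Z (fst x))" using fUs fexc_cong[OF grH ZU] by simp
  also have "\<dots> = int (fact d) * fexc G F Z" by (rule R3_GG(2)[OF gG gG' cov cv ce vZ])
  also have "\<dots> \<le> int (fact d) * max_excess G F" using R1[OF gG vZ] by (simp add: mult_left_mono)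
  finally show ?thesis by (simp add: M_def)
qed

end




theorem theorem1:
  fixes G :: "('v,'e) pre_digraph" and G' :: "('v2,'e2) pre_digraph"
    and fv :: "'v2 \<Rightarrow> 'v" and fe :: "'e2 \<Rightarrow> 'e"
    and F :: "('v,'e,'k::field) sheaf" and d :: nat
  assumes "fin_digraph G" and "fin_digraph G'"
    and "covering_map G' G fv fe"
    and "\<forall>v\<in>verts G. card {v'\<in>verts G'. fv v' = v} = d"
    and "\<forall>e\<in>arcs G. card {e'\<in>arcs G'. fe e' = e} = d"
  shows "max_excess G' (pullback fv fe F) = int d * max_excess G F
    \<and> (\<forall>Uv. (\<forall>v\<in>verts G. fsubspace (Uv v) \<and> Uv v \<subseteq> stalkV F v)
              \<and> attains_max_excess G F (dsum G F Uv)
          \<longrightarrow> attains_max_excess G' (pullback fv fe F) (dsum G' (pullback fv fe F) (\<lambda>v'. Uv (fv v'))))"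
proof -
  have gG: "gr G" and gG': "gr G'" using assms(1,2) fin_digraph_gr by auto
  note cov = assms(3) and cv = assms(4) and ce = assms(5)
  have cvv: "\<forall>v\<in>verts G'. fv v \<in> verts G" using cov_v[OF gG gG' cov cv ce] by blast
  have cee: "\<forall>e\<in>arcs G'. fe e \<in> arcs G \<and> tail G (fe e) = fv (tail G' e) \<and> head G (fe e) = fv (head G' e)"
    using cov_e[OF gG gG' cov cv ce] by blast
  let ?F' = "pullback fv fe F"
  have ge: "int d * max_excess G F \<le> max_excess G' ?F'"
  proof -
    obtain U where U: "valid G F U" "fexc G F U = max_excess G F" using R2[OF gG, of F] by blast
    have pb: "valid G' ?F' (\<lambda>v. U (fv v))" "fexc G' ?F' (\<lambda>v. U (fv v)) = int d * fexc G F U"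
      using R3[OF gG gG' cvv cee cv ce U(1)] by auto
    show ?thesis using R1[OF gG' pb(1)] pb(2) U(2) by simp
  qed
  have le: "max_excess G' ?F' \<le> int d * max_excess G F"
  proof -
    obtain U' where U': "valid G' ?F' U'" "fexc G' ?F' U' = max_excess G' ?F'" using R2[OF gG', of ?F'] by blast
    have "int (fact d) * max_excess G' ?F' \<le> int d * max_excess (GG G' G fv fe) (pullback fst fst F)"
      using lower_GG[OF gG gG' cov cv ce U'(1)] U'(2) by simp
    also have "\<dots> \<le> int d * (int (fact d) * max_excess G F)"
      using upper_GG[OF gG gG' cov cv ce, of F] by (simp add: mult_left_mono)
    finally have "int (fact d) * max_excess G' ?F' \<le> int (fact d) * (int d * max_excess G F)"
      by (simp add: algebra_simps)
    moreover have "0 < int (fact d)" by simp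
    ultimately show ?thesis by (simp add: mult_le_cancel_left_pos)
  qed
  have eqM: "max_excess G' ?F' = int d * max_excess G F" using ge le by simp
  show ?thesis
  proof (intro conjI allI impI)
    show "max_excess G' ?F' = int d * max_excess G F" by (rule eqM)
    fix Uv assume h: "(\<forall>v\<in>verts G. fsubspace (Uv v) \<and> Uv v \<subseteq> stalkV F v) \<and> attains_max_excess G F (dsum G F Uv)"
    have vU: "valid G F Uv" using h by (simp add: valid_def)
    have fe1: "fexc G F Uv = max_excess G F" using h E1[OF gG vU] by (simp add: attains_max_excess_def)
    have pb: "valid G' ?F' (\<lambda>v. Uv (fv v))" "fexc G' ?F' (\<lambda>v. Uv (fv v)) = int d * fexc G F Uv"
      using R3[OF gG gG' cvv cee cv ce vU] by auto
    show "attains_max_excess G' ?F' (dsum G' ?F' (\<lambda>v'. Uv (fv v')))"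
      unfolding attains_max_excess_def using adm_dsum[OF gG' pb(1)] E1[OF gG' pb(1)] pb(2) fe1 eqM by simp
  qed
qed


end
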